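(* Let $\beta>0$. Consider the equation $$\beta z\,u'(z)+u(z)^2+u(z)=2\int_0^1u(zr)\,dr,\qquad z\in(0,\infty).$$ Up to a dilation $z\mapsto cz$ ($c>0$), there is a unique solution $u$ of this equation which is positive and increasing on $(0,\infty)$ with $u(0)=0$ and $u(\infty)=1$. It satisfies $$u(z)\sim z^{\alpha}\ \ (z\to0^+)\quad\text{(for a suitable choice of the dilation)},\qquad 1-u(z)\sim\hat c\,z^{-\hat\alpha}\ \ (z\to\infty)$$ for some constant $\hat c$, where $\alpha\in(0,1)$ and $\hat\alpha\in(0,\tfrac13)$ are determined by $$\beta=\frac{1-\alpha}{\alpha(1+\alpha)}=\frac{1-3\hat\alpha}{\hat\alpha(1-\hat\alpha)}.$$ *)

theory Defs
  imports "HOL-Analysis.Analysis" "HOL-Library.Landau_Symbols"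
begin

definition is_profile :: "real \<Rightarrow> (real \<Rightarrow> real) \<Rightarrow> bool" where
  "is_profile \<beta> u \<longleftrightarrow>
     (\<forall>z>0. u differentiable (at z)
            \<and> (\<lambda>r. u (z * r)) integrable_on {0..1}
            \<and> \<beta> * z * deriv u z + (u z)\<^sup>2 + u z = 2 * integral {0..1} (\<lambda>r. u (z * r)))
   \<and> (\<forall>z>0. u z > 0)
   \<and> strict_mono_on {0<..} u
   \<and> (u \<longlongrightarrow> 0) (at_right 0)
   \<and> (u \<longlongrightarrow> 1) at_top"

end

theory Submission
  imports Defs "HOL-Real_Asymp.Real_Asymp"
begin


locale prof =
  fixes \<beta> \<alpha> \<alpha>h :: real
  assumes bpos: "\<beta> > 0"
    and a0: "0 < \<alpha>" and a1: "\<alpha> < 1" and ab: "\<beta> = (1 - \<alpha>) / (\<alpha> * (1 + \<alpha>))"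
    and h0: "0 < \<alpha>h" and h1: "\<alpha>h < 1/3" and hb: "\<beta> = (1 - 3 * \<alpha>h) / (\<alpha>h * (1 - \<alpha>h))"
begin

definition "x0 = \<alpha> * \<beta>"
definition "x1 = \<alpha>h * \<beta>"
definition "s0 = (1 - x0) / 2"
definition "s1 = (1 - x1) / 2"
definition FF :: "real \<Rightarrow> real \<Rightarrow> real" where "FF p s = 1 - (1 - 2 * p) * s - \<beta> * s / (1 - 2 * s)"
definition "mm = \<beta>/x0^2 - 1"
definition "MM = 1 + \<beta>/x1^2"
definition NN :: nat where "NN = nat \<lceil>MM\<rceil>"
definition "kk = (real NN - mm)/real NN"
definition pp :: "real \<Rightarrow> real" where "pp y = \<bar>y\<bar> / (1 + \<bar>y\<bar>)"
definition cl :: "real \<Rightarrow> real" where "cl s = max s0 (min s1 s)"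
definition GG :: "real \<Rightarrow> real \<Rightarrow> real" where "GG y s = FF (pp y) (cl s) + real NN * cl s"

lemma ab': "\<beta> * \<alpha> * (1 + \<alpha>) = 1 - \<alpha>"
proof -
  have "\<alpha> * (1 + \<alpha>) \<noteq> 0" using a0 by simp
  hence "\<beta> * (\<alpha> * (1 + \<alpha>)) = 1 - \<alpha>" by (subst ab) simp
  thus ?thesis by (simp add: mult.assoc)
qed
lemma hb': "\<beta> * \<alpha>h * (1 - \<alpha>h) = 1 - 3 * \<alpha>h"
proof -
  have "\<alpha>h * (1 - \<alpha>h) \<noteq> 0" using h0 h1 by simp
  hence "\<beta> * (\<alpha>h * (1 - \<alpha>h)) = 1 - 3 * \<alpha>h" by (subst hb) simp
  thus ?thesis by (simp add: mult.assoc)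
qed

lemma alpha_gt: "\<alpha>h < \<alpha>"
proof (rule ccontr)
  assume "\<not> \<alpha>h < \<alpha>"
  hence le: "\<alpha> \<le> \<alpha>h" by simp
  have "\<beta> * \<alpha> * (1 + \<alpha>) \<le> \<beta> * \<alpha>h * (1 + \<alpha>h)"
    using le a0 bpos by (intro mult_mono mult_left_mono) auto
  hence 1: "1 - \<alpha> \<le> \<beta> * \<alpha>h * (1 + \<alpha>h)" using ab' by simp
  have 2: "(1 - \<alpha>) * (1 - \<alpha>h) \<le> \<beta> * \<alpha>h * (1 + \<alpha>h) * (1 - \<alpha>h)"
    by (rule mult_right_mono[OF 1]) (use h1 in simp)
  have "\<beta> * \<alpha>h * (1 + \<alpha>h) * (1 - \<alpha>h) = (\<beta> * \<alpha>h * (1 - \<alpha>h)) * (1 + \<alpha>h)"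
    by (simp only: mult_ac)
  hence 3: "\<beta> * \<alpha>h * (1 + \<alpha>h) * (1 - \<alpha>h) = (1 - 3 * \<alpha>h) * (1 + \<alpha>h)"
    by (simp only: hb')
  have 4: "(1 - \<alpha>h) * (1 - \<alpha>h) \<le> (1 - \<alpha>) * (1 - \<alpha>h)"
    using le h1 by (intro mult_right_mono) auto
  have e1: "(1 - \<alpha>h) * (1 - \<alpha>h) = 1 - 2 * \<alpha>h + \<alpha>h * \<alpha>h" by (simp add: algebra_simps)
  have e2: "(1 - 3 * \<alpha>h) * (1 + \<alpha>h) = 1 - 2 * \<alpha>h - 3 * (\<alpha>h * \<alpha>h)" by (simp add: algebra_simps)
  have 5: "(1 - \<alpha>h) * (1 - \<alpha>h) \<le> (1 - 3 * \<alpha>h) * (1 + \<alpha>h)"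
    using 4 2 unfolding 3 by (rule order_trans)
  have 6: "\<alpha>h * \<alpha>h > 0" using h0 by simp
  have "4 * (\<alpha>h * \<alpha>h) \<le> 0" using 5 unfolding e1 e2 by linarith
  thus False using 6 by linarith
qed

lemma x_facts: "0 < x1" "x1 < x0" "x0 < 1" "x0^2 < \<beta>"
proof -
  show "0 < x1" using h0 bpos by (simp add: x1_def)
  show "x1 < x0" using alpha_gt bpos by (simp add: x1_def x0_def)
  have "x0 * (1 + \<alpha>) = 1 - \<alpha>" using ab' by (simp add: x0_def algebra_simps)
  thus "x0 < 1" using a0 a1
    by (smt (verit, best) mult_less_cancel_left1 x0_def bpos mult_pos_pos)
  have "x0^2 = \<beta> * (\<alpha> * x0)" by (simp add: x0_def power2_eq_square)
  moreover have "\<alpha> * x0 < 1" using \<open>x0 < 1\<close> a1 a0 \<open>0 < x1\<close> \<open>x1 < x0\<close>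
    by (smt (verit) mult_less_cancel_right1 mult_strict_mono)
  ultimately show "x0^2 < \<beta>" using bpos by simp
qed

lemma s_facts: "0 < s0" "s0 < s1" "s1 < 1/2" "1 - 2 * s0 = x0" "1 - 2 * s1 = x1"
  using x_facts by (auto simp: s0_def s1_def field_simps)

lemma F0: "FF 0 s0 = 0"
proof -
  have "\<beta> * s0 / (1 - 2 * s0) = (1 - x0) / (2 * \<alpha>)"
    using s_facts x_facts a0 bpos by (simp add: s0_def x0_def field_simps)
  moreover have "(1 + x0) / 2 = (1 - x0) / (2 * \<alpha>)"
    using ab' a0 by (simp add: x0_def field_simps)
  moreover have "FF 0 s0 = (1 - s0) - \<beta> * s0 / (1 - 2 * s0)" unfolding FF_def by simp
  moreover have "1 - s0 = (1 + x0) / 2" by (simp add: s0_def field_simps)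
  ultimately show ?thesis by linarith
qed

lemma F1: "FF 1 s1 = 0"
proof -
  have "\<beta> * s1 / (1 - 2 * s1) = (1 - x1) / (2 * \<alpha>h)"
    using s_facts x_facts h0 bpos by (simp add: s1_def x1_def field_simps)
  moreover have "(3 - x1) / 2 = (1 - x1) / (2 * \<alpha>h)"
    using hb' h0 by (simp add: x1_def field_simps)
  moreover have "FF 1 s1 = (1 + s1) - \<beta> * s1 / (1 - 2 * s1)" unfolding FF_def by simp
  moreover have "1 + s1 = (3 - x1) / 2" by (simp add: s1_def field_simps)
  ultimately show ?thesis by linarith
qed

lemma F_diff:
  assumes "1 - 2 * s \<noteq> 0" "1 - 2 * t \<noteq> 0"
  shows "FF p t - FF p s = - (t - s) * ((1 - 2 * p) + \<beta> / ((1 - 2 * s) * (1 - 2 * t)))"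
proof -
  have q: "t / (1 - 2 * t) - s / (1 - 2 * s) = (t - s) / ((1 - 2 * s) * (1 - 2 * t))"
    using assms by (simp add: field_simps)
  have f1: "FF p t = 1 - (1 - 2 * p) * t - \<beta> * (t / (1 - 2 * t))" by (simp add: FF_def)
  have f2: "FF p s = 1 - (1 - 2 * p) * s - \<beta> * (s / (1 - 2 * s))" by (simp add: FF_def)
  have f3: "(1 - 2 * p) * (t - s) = (1 - 2 * p) * t - (1 - 2 * p) * s" by (simp add: algebra_simps)
  have f4: "\<beta> * (t / (1 - 2 * t) - s / (1 - 2 * s)) = \<beta> * (t / (1 - 2 * t)) - \<beta> * (s / (1 - 2 * s))"
    by (simp only: right_diff_distrib)
  have "FF p t - FF p s = - (1 - 2 * p) * (t - s) - \<beta> * (t / (1 - 2 * t) - s / (1 - 2 * s))"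
  proof -
    have f5: "- (1 - 2 * p) * (t - s) = - ((1 - 2 * p) * (t - s))" by (simp only: minus_mult_left)
    show ?thesis using f1 f2 f3 f4 f5 by linarith
  qed
  also have "\<dots> = - (t - s) * ((1 - 2 * p) + \<beta> / ((1 - 2 * s) * (1 - 2 * t)))"
  proof -
    have gen: "\<And>X. - (1 - 2 * p) * (t - s) - (t - s) * X = - (t - s) * ((1 - 2 * p) + X)"
      by (simp add: algebra_simps)
    have g: "\<beta> * ((t - s) / ((1 - 2 * s) * (1 - 2 * t))) = (t - s) * (\<beta> / ((1 - 2 * s) * (1 - 2 * t)))"
      by simp
    show ?thesis unfolding q g by (rule gen)
  qed
  finally show ?thesis .
qed

lemma F_p0: "FF p s = FF 0 s + 2 * p * s" unfolding FF_def by (simp add: algebra_simps)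
lemma F_p1: "FF p s = FF 1 s - 2 * (1 - p) * s" unfolding FF_def by (simp add: algebra_simps)

lemma m_facts: "0 < mm" "mm < MM" "MM \<le> real NN" "2 \<le> NN" "1 < MM"
proof -
  have x0p: "0 < x0^2" using x_facts by simp
  show "0 < mm" using x_facts x0p unfolding mm_def by (simp add: field_simps)
  have "x1^2 < x0^2" using x_facts by (intro power_strict_mono) auto
  hence "\<beta> / x0^2 < \<beta> / x1^2" using bpos x_facts by (intro divide_strict_left_mono) auto
  thus "mm < MM" unfolding mm_def MM_def by simp
  show "MM \<le> real NN" unfolding NN_def by linarith
  show "1 < MM" unfolding MM_def using bpos x_facts by simp
  hence "2 \<le> \<lceil>MM\<rceil>" by linarith
  thus "2 \<le> NN" unfolding NN_def by linarith
qed

lemma coef_bounds: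
  assumes "s0 \<le> s" "s \<le> s1" "s0 \<le> t" "t \<le> s1" "0 \<le> p" "p \<le> 1"
  shows "mm \<le> (1 - 2 * p) + \<beta> / ((1 - 2 * s) * (1 - 2 * t))"
    and "(1 - 2 * p) + \<beta> / ((1 - 2 * s) * (1 - 2 * t)) \<le> MM"
proof -
  have a: "x1 \<le> 1 - 2 * s" "1 - 2 * s \<le> x0" "x1 \<le> 1 - 2 * t" "1 - 2 * t \<le> x0"
    using assms s_facts by linarith+
  have x1p: "0 < x1" using x_facts by simp
  have "(1 - 2 * s) * (1 - 2 * t) \<le> x0 * x0" using a x1p by (intro mult_mono) auto
  moreover have "x1 * x1 \<le> (1 - 2 * s) * (1 - 2 * t)" using a x1p by (intro mult_mono) auto
  moreover have "0 < x1 * x1" using x1p by simp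
  ultimately have b1: "\<beta> / (x0 * x0) \<le> \<beta> / ((1 - 2 * s) * (1 - 2 * t))"
     and b2: "\<beta> / ((1 - 2 * s) * (1 - 2 * t)) \<le> \<beta> / (x1 * x1)"
    using bpos x_facts a by (auto intro!: divide_left_mono mult_pos_pos)
  show "mm \<le> (1 - 2 * p) + \<beta> / ((1 - 2 * s) * (1 - 2 * t))"
    using b1 assms unfolding mm_def power2_eq_square by linarith
  show "(1 - 2 * p) + \<beta> / ((1 - 2 * s) * (1 - 2 * t)) \<le> MM"
    using b2 assms unfolding MM_def power2_eq_square by linarith
qed

lemma core_diff:
  assumes "s0 \<le> a" "a \<le> s1" "s0 \<le> b" "b \<le> s1" "0 \<le> p" "p \<le> 1"
  obtains c where "mm \<le> c" "c \<le> MM"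
    "(FF p b + real NN * b) - (FF p a + real NN * a) = (real NN - c) * (b - a)"
proof -
  have "1 - 2 * a \<noteq> 0" "1 - 2 * b \<noteq> 0" using assms s_facts by linarith+
  define c where "c = (1 - 2 * p) + \<beta> / ((1 - 2 * a) * (1 - 2 * b))"
  have e: "FF p b - FF p a = - (b - a) * c" unfolding c_def
    by (rule F_diff[OF \<open>1 - 2 * a \<noteq> 0\<close> \<open>1 - 2 * b \<noteq> 0\<close>, of p])
  have "(FF p b + real NN * b) - (FF p a + real NN * a) = (FF p b - FF p a) + real NN * (b - a)"
    by (simp add: algebra_simps)
  also have "\<dots> = - (b - a) * c + real NN * (b - a)" by (simp only: e)
  also have "\<dots> = (real NN - c) * (b - a)" by (simp add: algebra_simps)
  finally have "(FF p b + real NN * b) - (FF p a + real NN * a) = (real NN - c) * (b - a)" .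
  thus ?thesis using that coef_bounds[OF assms] unfolding c_def by blast
qed

lemma pp_range: "0 \<le> pp y" "pp y \<le> 1" unfolding pp_def by auto

lemma cl_facts: "s0 \<le> cl s" "cl s \<le> s1" "s0 \<le> s \<Longrightarrow> s \<le> s1 \<Longrightarrow> cl s = s"
  "\<bar>cl s - cl t\<bar> \<le> \<bar>s - t\<bar>" "s \<le> t \<Longrightarrow> cl s \<le> cl t" "cl (cl s) = cl s"
  using s_facts unfolding cl_def by auto

lemma GG_cl: "GG y (cl s) = GG y s" unfolding GG_def by (simp add: cl_facts)

lemma GG_mono_lip:
  assumes "s \<le> t"
  shows "GG y s \<le> GG y t" "GG y t - GG y s \<le> (real NN - mm) * (t - s)"
proof -
  obtain c where c: "mm \<le> c" "c \<le> MM"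
    "(FF (pp y) (cl t) + real NN * cl t) - (FF (pp y) (cl s) + real NN * cl s) = (real NN - c) * (cl t - cl s)"
    using core_diff[of "cl s" "cl t" "pp y"] cl_facts pp_range by blast
  have d: "0 \<le> cl t - cl s" "cl t - cl s \<le> t - s" using cl_facts(5)[OF assms] cl_facts(4)[of t s] assms by auto
  have e: "0 \<le> real NN - c" using c m_facts by linarith
  have "GG y t - GG y s = (real NN - c) * (cl t - cl s)" using c(3) unfolding GG_def by simp
  moreover have "(real NN - c) * (cl t - cl s) \<le> (real NN - mm) * (t - s)"
    using d e c by (intro mult_mono) auto
  moreover have "0 \<le> (real NN - c) * (cl t - cl s)" using d e by simp
  ultimately show "GG y s \<le> GG y t" "GG y t - GG y s \<le> (real NN - mm) * (t - s)" by linarith+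
qed

lemma GG_lip: "\<bar>GG y s - GG y t\<bar> \<le> (real NN - mm) * \<bar>s - t\<bar>"
proof (cases "s \<le> t")
  case True thus ?thesis using GG_mono_lip[OF True, of y] by (simp add: abs_if)
next
  case False hence "t \<le> s" by simp
  thus ?thesis using GG_mono_lip[OF \<open>t \<le> s\<close>, of y] by (simp add: abs_if)
qed

lemma GG_range: "real NN * s0 \<le> GG y s" "GG y s \<le> real NN * s1"
proof -
  have "GG y s0 \<le> GG y (cl s)" using GG_mono_lip(1) cl_facts by blast
  moreover have "GG y s0 = FF (pp y) s0 + real NN * s0" unfolding GG_def using cl_facts s_facts by simp
  moreover have "FF (pp y) s0 = 2 * pp y * s0" using F_p0[of "pp y" s0] F0 by simp
  moreover have "0 \<le> 2 * pp y * s0" using pp_range s_facts by simp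
  ultimately show "real NN * s0 \<le> GG y s" using GG_cl by simp
  have "GG y (cl s) \<le> GG y s1" using GG_mono_lip(1) cl_facts by blast
  moreover have "GG y s1 = FF (pp y) s1 + real NN * s1" unfolding GG_def using cl_facts s_facts by simp
  moreover have "FF (pp y) s1 = - (2 * (1 - pp y) * s1)" using F_p1[of "pp y" s1] F1 by linarith
  moreover have "0 \<le> 2 * (1 - pp y) * s1" using pp_range s_facts by simp
  ultimately show "GG y s \<le> real NN * s1" using GG_cl by simp
qed

lemma GG_near0:
  assumes "s0 \<le> s" "s \<le> s1"
  shows "GG y s - real NN * s0 \<le> (real NN - mm) * (s - s0) + pp y"
proof -
  have "GG y s - GG y s0 \<le> (real NN - mm) * (s - s0)" using GG_mono_lip(2) assms by blast
  moreover have "GG y s0 = FF (pp y) s0 + real NN * s0" unfolding GG_def using cl_facts s_facts by simp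
  moreover have "FF (pp y) s0 = 2 * pp y * s0" using F_p0[of "pp y" s0] F0 by simp
  moreover have "pp y * (2 * s0) \<le> pp y * 1" using pp_range s_facts
    by (intro mult_left_mono) auto
  hence "2 * pp y * s0 \<le> pp y" by (simp add: mult_ac)
  ultimately show ?thesis by linarith
qed

end


lemma int_pow01: "((\<lambda>r::real. r ^ n) has_integral (1 / real (Suc n))) {0..1}"
proof -
  have "((\<lambda>r::real. r ^ n) has_integral ((\<lambda>r. r ^ Suc n / real (Suc n)) 1 - (\<lambda>r. r ^ Suc n / real (Suc n)) 0)) {0..1}"
  proof (rule fundamental_theorem_of_calculus)
    fix x :: real assume "x \<in> {0..1}"
    have "((\<lambda>r. r ^ Suc n / real (Suc n)) has_real_derivative (real (Suc n) * x ^ n) / real (Suc n)) (at x within {0..1})"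
      using DERIV_cdivide[OF DERIV_pow[of "Suc n" x "{0..1}"], of "real (Suc n)"] by simp
    hence "((\<lambda>r. r ^ Suc n / real (Suc n)) has_real_derivative x ^ n) (at x within {0..1})"
      by (simp del: of_nat_Suc)
    thus "((\<lambda>r. r ^ Suc n / real (Suc n)) has_vector_derivative x ^ n) (at x within {0..1})"
      by (simp add: has_real_derivative_iff_has_vector_derivative)
  qed simp
  thus ?thesis by simp
qed

context prof begin

lemma cl_cont: "continuous_on U b \<Longrightarrow> continuous_on U (\<lambda>x. cl (b x))"
  unfolding cl_def by (intro continuous_intros)

lemma pp_cont: "continuous_on U b \<Longrightarrow> continuous_on U (\<lambda>x. pp (b x))"
proof -
  assume b: "continuous_on U b"
  have n2: "1 + \<bar>y\<bar> \<noteq> 0" for y :: real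
  proof -
    have "0 < 1 + \<bar>y\<bar>" by (rule add_pos_nonneg) auto
    thus ?thesis by simp
  qed
  show ?thesis unfolding pp_def using n2 by (intro continuous_intros b) auto
qed

lemma FF_cont: "continuous_on U p \<Longrightarrow> continuous_on U q \<Longrightarrow> (\<And>x. x \<in> U \<Longrightarrow> 1 - 2 * q x \<noteq> 0)
  \<Longrightarrow> continuous_on U (\<lambda>x. FF (p x) (q x))"
  unfolding FF_def by (intro continuous_intros) auto

lemma GG_cont:
  assumes "continuous_on U a" "continuous_on U b"
  shows "continuous_on U (\<lambda>x. GG (a x) (b x))"
proof -
  have n1: "1 - 2 * cl s \<noteq> 0" for s using cl_facts(2)[of s] s_facts by linarith
  show ?thesis unfolding GG_def
    by (intro continuous_intros FF_cont pp_cont cl_cont assms n1)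
qed

definition ker :: "(real \<Rightarrow> real) \<Rightarrow> real \<Rightarrow> real" where
  "ker S Y = integral {0..1} (\<lambda>r. r ^ (NN - 1) * GG (\<bar>Y\<bar> * r) (S (\<bar>Y\<bar> * r)))"

lemma int_kernel: "((\<lambda>r::real. r ^ (NN - 1)) has_integral 1 / real NN) {0..1}"
proof -
  have "Suc (NN - 1) = NN" using m_facts by simp
  thus ?thesis using int_pow01[of "NN - 1"] by simp
qed

lemma int_kernel_c: "((\<lambda>r::real. r ^ (NN - 1) * c) has_integral c / real NN) {0..1}"
  using has_integral_mult_left[OF int_kernel, of c] by simp

lemma ker_integrand_cont:
  assumes "continuous_on UNIV S"
  shows "continuous_on (UNIV \<times> {0..1}) (\<lambda>(Y, r). r ^ (NN - 1) * GG (\<bar>Y\<bar> * r) (S (\<bar>Y\<bar> * r)))"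
proof -
  have c1: "continuous_on (UNIV \<times> {0..1}) (\<lambda>x::real\<times>real. \<bar>fst x\<bar> * snd x)"
    by (intro continuous_intros)
  have c2: "continuous_on (UNIV \<times> {0..1}) (\<lambda>x::real\<times>real. S (\<bar>fst x\<bar> * snd x))"
    by (rule continuous_on_compose2[OF assms c1]) auto
  have "continuous_on (UNIV \<times> {0..1}) (\<lambda>x::real\<times>real. snd x ^ (NN - 1) * GG (\<bar>fst x\<bar> * snd x) (S (\<bar>fst x\<bar> * snd x)))"
    by (intro continuous_intros GG_cont c1 c2)
  thus ?thesis by (simp add: case_prod_beta)
qed

lemma ker_integrable:
  assumes "continuous_on UNIV S"
  shows "(\<lambda>r. r ^ (NN - 1) * GG (\<bar>Y\<bar> * r) (S (\<bar>Y\<bar> * r))) integrable_on {0..1}"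
proof -
  have "continuous_on {0..1} (\<lambda>r. S (\<bar>Y\<bar> * r))"
    by (rule continuous_on_compose2[OF assms]) (auto intro!: continuous_intros)
  hence "continuous_on {0..1} (\<lambda>r. r ^ (NN - 1) * GG (\<bar>Y\<bar> * r) (S (\<bar>Y\<bar> * r)))"
    by (intro continuous_intros GG_cont)
  thus ?thesis by (rule integrable_continuous_interval)
qed

lemma ker_cont:
  assumes "continuous_on UNIV S"
  shows "continuous_on UNIV (ker S)"
proof -
  have "continuous_on UNIV (\<lambda>Y. integral (cbox 0 1) (\<lambda>r. r ^ (NN - 1) * GG (\<bar>Y\<bar> * r) (S (\<bar>Y\<bar> * r))))"
    using ker_integrand_cont[OF assms] by (intro integral_continuous_on_param) simp
  thus ?thesis unfolding ker_def by simp
qed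

lemma ker_le:
  assumes "continuous_on UNIV S"
    and "\<And>r. r \<in> {0..1} \<Longrightarrow> GG (\<bar>Y\<bar> * r) (S (\<bar>Y\<bar> * r)) \<le> c"
  shows "ker S Y \<le> c / real NN"
proof -
  have "ker S Y \<le> integral {0..1} (\<lambda>r. r ^ (NN - 1) * c)"
    unfolding ker_def
    by (rule integral_le[OF ker_integrable[OF assms(1)]])
       (use int_kernel_c assms(2) in \<open>auto intro!: mult_left_mono simp: integrable_on_def\<close>)
  thus ?thesis using integral_unique[OF int_kernel_c[of c]] by linarith
qed

lemma ker_ge:
  assumes "continuous_on UNIV S"
    and "\<And>r. r \<in> {0..1} \<Longrightarrow> c \<le> GG (\<bar>Y\<bar> * r) (S (\<bar>Y\<bar> * r))"
  shows "c / real NN \<le> ker S Y"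
proof -
  have "integral {0..1} (\<lambda>r. r ^ (NN - 1) * c) \<le> ker S Y"
    unfolding ker_def
    by (rule integral_le[OF _ ker_integrable[OF assms(1)]])
       (use int_kernel_c assms(2) in \<open>auto intro!: mult_left_mono simp: integrable_on_def\<close>)
  thus ?thesis using integral_unique[OF int_kernel_c[of c]] by linarith
qed

lemma ker_range:
  assumes "continuous_on UNIV S"
  shows "s0 \<le> ker S Y" "ker S Y \<le> s1"
proof -
  have "real NN * s0 / real NN \<le> ker S Y" by (rule ker_ge[OF assms GG_range(1)])
  thus "s0 \<le> ker S Y" using m_facts by simp
  have "ker S Y \<le> real NN * s1 / real NN" by (rule ker_le[OF assms GG_range(2)])
  thus "ker S Y \<le> s1" using m_facts by simp
qed

lemma ker_bcontfun:
  assumes "continuous_on UNIV S"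
  shows "ker S \<in> bcontfun"
proof (rule bcontfun_normI[OF ker_cont[OF assms]])
  fix Y show "norm (ker S Y) \<le> 1" using ker_range[OF assms, of Y] s_facts by simp
qed

definition Phi :: "(real \<Rightarrow>\<^sub>C real) \<Rightarrow> (real \<Rightarrow>\<^sub>C real)" where
  "Phi S = Bcontfun (ker (apply_bcontfun S))"

lemma Phi_apply: "apply_bcontfun (Phi S) = ker (apply_bcontfun S)"
  unfolding Phi_def using ker_bcontfun[of "apply_bcontfun S"] by (simp add: Bcontfun_inverse)

definition XX :: "(real \<Rightarrow>\<^sub>C real) set" where
  "XX = PiC UNIV (\<lambda>y. {s0 .. min s1 (s0 + pp y / mm)})"

lemma XX_closed: "closed XX"
  unfolding XX_def by (rule closed_PiC) simp

lemma XX_ne: "XX \<noteq> {}"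
proof -
  have "Bcontfun (\<lambda>_. s0) \<in> XX"
    unfolding XX_def using s_facts m_facts pp_range
    by (intro mem_PiCI) (auto simp: Bcontfun_inverse const_bcontfun)
  thus ?thesis by blast
qed

lemma pp_mono: "\<bar>y\<bar> \<le> \<bar>z\<bar> \<Longrightarrow> pp y \<le> pp z"
  unfolding pp_def by (simp add: frac_le divide_le_cancel field_simps) 

lemma XX_inv: "S \<in> XX \<Longrightarrow> Phi S \<in> XX"
proof -
  assume S: "S \<in> XX"
  have Sb: "s0 \<le> S y" "S y \<le> s1" "S y \<le> s0 + pp y / mm" for y
    using mem_PiCD[OF S[unfolded XX_def]] by auto
  have main: "ker S Y \<in> {s0 .. min s1 (s0 + pp Y / mm)}" for Y
  proof -
    have A: "s0 \<le> ker S Y" "ker S Y \<le> s1" using ker_range by auto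
    have "ker S Y \<le> (real NN * s0 + real NN * pp Y / mm) / real NN"
    proof (rule ker_le)
      fix r :: real assume r: "r \<in> {0..1}"
      define y where "y = \<bar>Y\<bar> * r"
      have "\<bar>y\<bar> \<le> \<bar>Y\<bar>" using r by (auto simp: y_def abs_mult mult_left_le)
      hence ppy: "pp y \<le> pp Y" by (rule pp_mono)
      have "GG y (S y) - real NN * s0 \<le> (real NN - mm) * (S y - s0) + pp y"
        using GG_near0 Sb by blast
      also have "\<dots> \<le> (real NN - mm) * (pp y / mm) + pp y"
        using Sb(3)[of y] m_facts by (intro add_right_mono mult_left_mono) auto
      also have "\<dots> = real NN * pp y / mm" using m_facts by (simp add: field_simps)
      also have "\<dots> \<le> real NN * pp Y / mm" using ppy m_facts
        by (intro divide_right_mono mult_left_mono) auto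
      finally show "GG (\<bar>Y\<bar> * r) (S (\<bar>Y\<bar> * r)) \<le> real NN * s0 + real NN * pp Y / mm"
        unfolding y_def by simp
    qed simp
    moreover have "(real NN * s0 + real NN * pp Y / mm) / real NN = s0 + pp Y / mm"
      using m_facts by (simp add: field_simps)
    ultimately have "ker S Y \<le> s0 + pp Y / mm" by linarith
    thus ?thesis using A by simp
  qed
  show "Phi S \<in> XX" unfolding XX_def
    by (rule mem_PiCI) (use main in \<open>simp add: Phi_apply Pi_def\<close>)
qed

lemma Phi_contr: "dist (Phi S) (Phi T) \<le> kk * dist S T"
proof (rule dist_bound)
  fix Y
  define d where "d = dist S T"
  define f where "f r = r ^ (NN - 1) * GG (\<bar>Y\<bar> * r) (S (\<bar>Y\<bar> * r))" for r
  define g where "g r = r ^ (NN - 1) * GG (\<bar>Y\<bar> * r) (T (\<bar>Y\<bar> * r))" for r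
  have fi: "f integrable_on {0..1}" unfolding f_def by (rule ker_integrable) simp
  have gi: "g integrable_on {0..1}" unfolding g_def by (rule ker_integrable) simp
  have hi: "(\<lambda>r. r ^ (NN - 1) * ((real NN - mm) * d)) integrable_on {0..1}"
    using int_kernel_c by (auto simp: integrable_on_def)
  have pt: "\<bar>f r - g r\<bar> \<le> r ^ (NN - 1) * ((real NN - mm) * d)" if r: "r \<in> {0..1}" for r
  proof -
    have "\<bar>f r - g r\<bar> = r ^ (NN - 1) * \<bar>GG (\<bar>Y\<bar> * r) (S (\<bar>Y\<bar> * r)) - GG (\<bar>Y\<bar> * r) (T (\<bar>Y\<bar> * r))\<bar>"
      using r unfolding f_def g_def by (simp add: abs_mult right_diff_distrib[symmetric])
    also have "\<dots> \<le> r ^ (NN - 1) * ((real NN - mm) * \<bar>S (\<bar>Y\<bar> * r) - T (\<bar>Y\<bar> * r)\<bar>)"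
      using r by (intro mult_left_mono GG_lip) auto
    also have "\<dots> \<le> r ^ (NN - 1) * ((real NN - mm) * d)"
      using r m_facts dist_bounded[of S "\<bar>Y\<bar> * r" T] unfolding d_def
      by (intro mult_left_mono) (auto simp: dist_real_def)
    finally show ?thesis .
  qed
  have pt1: "f r - g r \<le> r ^ (NN - 1) * ((real NN - mm) * d)" if "r \<in> {0..1}" for r
    using pt[OF that] by (simp add: abs_le_iff)
  have pt2: "- (r ^ (NN - 1) * ((real NN - mm) * d)) \<le> f r - g r" if "r \<in> {0..1}" for r
    using pt[OF that] by (simp add: abs_le_iff)
  have "integral {0..1} (\<lambda>r. f r - g r) \<le> integral {0..1} (\<lambda>r. r ^ (NN - 1) * ((real NN - mm) * d))"
    by (rule integral_le) (use fi gi hi pt1 in \<open>auto intro: integrable_diff\<close>)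
  moreover have "- integral {0..1} (\<lambda>r. r ^ (NN - 1) * ((real NN - mm) * d)) \<le> integral {0..1} (\<lambda>r. f r - g r)"
  proof -
    have "integral {0..1} (\<lambda>r. - (r ^ (NN - 1) * ((real NN - mm) * d))) \<le> integral {0..1} (\<lambda>r. f r - g r)"
      by (rule integral_le) (use fi gi hi pt2 in \<open>auto intro: integrable_diff integrable_neg\<close>)
    thus ?thesis by (simp add: integral_neg)
  qed
  moreover have "integral {0..1} (\<lambda>r. r ^ (NN - 1) * ((real NN - mm) * d)) = kk * d"
  proof -
    have "integral {0..1} (\<lambda>r. r ^ (NN - 1) * ((real NN - mm) * d)) = (real NN - mm) * d / real NN"
      by (rule integral_unique[OF int_kernel_c])
    thus ?thesis unfolding kk_def by simp
  qed
  moreover have "integral {0..1} (\<lambda>r. f r - g r) = Phi S Y - Phi T Y"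
    unfolding Phi_apply ker_def f_def g_def by (rule integral_diff[OF fi[unfolded f_def] gi[unfolded g_def]])
  ultimately show "dist (Phi S Y) (Phi T Y) \<le> kk * dist S T"
    unfolding d_def dist_real_def by linarith
qed

lemma kk_bounds: "0 \<le> kk" "kk < 1"
  using m_facts unfolding kk_def by (auto simp: field_simps)

lemma fixpoint_exists: "\<exists>S\<in>XX. Phi S = S"
  using Banach_fix[OF _ XX_ne kk_bounds, of Phi] XX_closed XX_inv Phi_contr
  by (auto simp: complete_eq_closed)

end


context prof begin

definition Sf where "Sf = (SOME S. S \<in> XX \<and> Phi S = S)"

lemma Sf: "Sf \<in> XX" "Phi Sf = Sf"
  using someI_ex[OF fixpoint_exists[unfolded Bex_def]] unfolding Sf_def by auto

definition SS :: "real \<Rightarrow> real" where "SS y = apply_bcontfun Sf y"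

lemma SS_cont: "continuous_on UNIV SS" unfolding SS_def by simp

lemma SS_fix: "SS Y = ker SS Y"
proof -
  have "SS Y = apply_bcontfun (Phi Sf) Y" using Sf(2) unfolding SS_def by simp
  also have "\<dots> = ker SS Y" unfolding Phi_apply SS_def ..
  finally show ?thesis .
qed

lemma SS_bounds: "s0 \<le> SS y" "SS y \<le> s1" "SS y \<le> s0 + pp y / mm"
  using mem_PiCD[OF Sf(1)[unfolded XX_def]] unfolding SS_def by auto

definition hh :: "real \<Rightarrow> real" where "hh y = GG y (SS y)"

lemma hh_cont: "continuous_on U hh"
  unfolding hh_def by (intro GG_cont continuous_intros continuous_on_subset[OF SS_cont]) auto

lemma SS_int:
  assumes Y: "Y > 0"
  shows "SS Y * Y ^ NN = integral {0..Y} (\<lambda>y. y ^ (NN - 1) * hh y)"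
proof -
  define f where "f y = y ^ (NN - 1) * hh y" for y
  define I where "I = integral {0..Y} f"
  have "continuous_on {0..Y} f" unfolding f_def by (intro continuous_intros hh_cont)
  hence fI: "(f has_integral I) {0..Y}" unfolding I_def
    by (intro integrable_integral integrable_continuous_interval)
  have "((\<lambda>x. f (Y * x)) has_integral (1 / \<bar>Y\<bar>) *\<^sub>R I) ((\<lambda>x. x / Y) ` {0..Y})"
    by (rule has_integral_stretch_real[OF fI]) (use Y in simp)
  moreover have "(\<lambda>x. x / Y) ` {0..Y} = {0..1}" using Y by simp
  ultimately have "((\<lambda>x. f (Y * x)) has_integral I / Y) {0..1}" using Y by simp
  hence "((\<lambda>x. (1 / Y ^ (NN - 1)) * f (Y * x)) has_integral (1 / Y ^ (NN - 1)) * (I / Y)) {0..1}"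
    by (rule has_integral_mult_right)
  moreover have "(1 / Y ^ (NN - 1)) * f (Y * x) = x ^ (NN - 1) * GG (\<bar>Y\<bar> * x) (SS (\<bar>Y\<bar> * x))" for x
    using Y unfolding f_def hh_def by (simp add: power_mult_distrib)
  ultimately have "ker SS Y = (1 / Y ^ (NN - 1)) * (I / Y)"
    unfolding ker_def by (simp add: integral_unique)
  moreover have "Y ^ NN = Y ^ (NN - 1) * Y" using m_facts
    by (metis Suc_pred' less_le_trans numeral_2_eq_2 pos2 power_Suc2 Suc_le_eq)
  ultimately have "SS Y * Y ^ NN = I" using Y SS_fix[of Y] by (simp add: field_simps)
  thus ?thesis unfolding I_def f_def .
qed

lemma SS_deriv:
  assumes Y: "Y > 0"
  shows "(SS has_real_derivative (hh Y - real NN * SS Y) / Y) (at Y)"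
proof -
  define f where "f y = y ^ (NN - 1) * hh y" for y
  define I where "I x = integral {0..x} f" for x
  have fc: "continuous_on {0..Y+1} f" unfolding f_def by (intro continuous_intros hh_cont)
  have "(I has_real_derivative f Y) (at Y within {0..Y+1})"
    unfolding I_def by (rule integral_has_real_derivative[OF fc]) (use Y in simp)
  moreover have "at Y within {0..Y+1} = at Y" using Y by (intro at_within_interior) simp
  ultimately have dI: "(I has_real_derivative f Y) (at Y)" by simp
  have dQ: "((\<lambda>x. I x / x ^ NN) has_real_derivative
      (f Y * Y ^ NN - I Y * (real NN * Y ^ (NN - 1))) / (Y ^ NN * Y ^ NN)) (at Y)"
    using Y by (auto intro!: derivative_eq_intros dI simp: power2_eq_square)
  have eq: "SS x = I x / x ^ NN" if "x \<in> {0<..}" for x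
    using SS_int[of x] that unfolding I_def f_def by (simp add: field_simps)
  have dS: "(SS has_real_derivative
      (f Y * Y ^ NN - I Y * (real NN * Y ^ (NN - 1))) / (Y ^ NN * Y ^ NN)) (at Y)"
    by (rule has_field_derivative_transform_within_open[OF dQ, of "{0<..}"]) (use Y eq in auto)
  have pw: "Y ^ NN = Y ^ (NN - 1) * Y" using m_facts
    by (metis Suc_pred' less_le_trans numeral_2_eq_2 pos2 power_Suc2 Suc_le_eq)
  have IY: "I Y = SS Y * Y ^ NN" using eq[of Y] Y by simp
  have "(f Y * Y ^ NN - I Y * (real NN * Y ^ (NN - 1))) / (Y ^ NN * Y ^ NN) = (hh Y - real NN * SS Y) / Y"
    unfolding IY f_def pw using Y by (simp add: field_simps power_mult_distrib)
  with dS show ?thesis by simp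
qed

definition sg :: "real \<Rightarrow> real" where "sg t = exp t / (1 + exp t)"
definition ss :: "real \<Rightarrow> real" where "ss t = SS (exp t)"

lemma pp_exp: "pp (exp t) = sg t" unfolding pp_def sg_def by simp

lemma ss_bounds: "s0 \<le> ss t" "ss t \<le> s1" "ss t - s0 \<le> sg t / mm"
  using SS_bounds[of "exp t"] unfolding ss_def pp_exp by auto

lemma ss_deriv: "(ss has_real_derivative FF (sg t) (ss t)) (at t)"
proof -
  have "((\<lambda>t. SS (exp t)) has_real_derivative ((hh (exp t) - real NN * SS (exp t)) / exp t) * exp t) (at t)"
    by (rule DERIV_chain2[OF SS_deriv DERIV_exp]) simp
  moreover have "((hh (exp t) - real NN * SS (exp t)) / exp t) * exp t = FF (sg t) (ss t)"
    using ss_bounds[of t] cl_facts(3)[of "ss t"]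
    unfolding hh_def GG_def ss_def pp_exp by simp
  ultimately show ?thesis unfolding ss_def by simp
qed

lemma ss_cont: "continuous_on U ss"
  using ss_deriv by (meson DERIV_continuous continuous_at_imp_continuous_on)

end


lemma antideriv_R:
  fixes f :: "real \<Rightarrow> real"
  assumes fc: "continuous_on UNIV f"
  obtains g where "\<And>x. (g has_real_derivative f x) (at x)" "g 0 = 0"
proof -
  define G where "G c x = integral {c..x} f" for c x
  have int: "f integrable_on {a..b}" for a b
    by (rule integrable_continuous_interval) (rule continuous_on_subset[OF fc], simp)
  have comb: "G c1 x = G c1 c2 + G c2 x" if "c1 \<le> c2" "c2 \<le> x" for c1 c2 x
    unfolding G_def using Henstock_Kurzweil_Integration.integral_combine[OF that int] by simp
  have dG: "(G c has_real_derivative f x) (at x)" if "c < x" for c x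
  proof -
    have "(G c has_real_derivative f x) (at x within {c..x+1})"
      unfolding G_def by (rule integral_has_real_derivative) (use that in \<open>auto intro: continuous_on_subset[OF fc]\<close>)
    moreover have "at x within {c..x+1} = at x" using that by (intro at_within_interior) simp
    ultimately show ?thesis by simp
  qed
  have indep: "G c1 x - G c1 0 = G c2 x - G c2 0" if "c1 \<le> min x 0" "c2 \<le> min x 0" for c1 c2 x
  proof (cases "c1 \<le> c2")
    case True
    thus ?thesis using comb[OF True, of x] comb[OF True, of 0] that by simp
  next
    case False
    hence c21: "c2 \<le> c1" by simp
    show ?thesis using comb[OF c21, of x] comb[OF c21, of 0] that by simp
  qed
  define g where "g x = G (- (\<bar>x\<bar> + 1)) x - G (- (\<bar>x\<bar> + 1)) 0" for x
  have "(g has_real_derivative f x) (at x)" for x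
  proof -
    define c where "c = - (\<bar>x\<bar> + 2)"
    have d: "((\<lambda>y. G c y - G c 0) has_real_derivative f x) (at x)"
      using dG[of c x] unfolding c_def by (auto intro!: derivative_eq_intros)
    show ?thesis
    proof (rule has_field_derivative_transform_within_open[OF d, of "ball x 1"])
      fix y assume "y \<in> ball x 1"
      hence "\<bar>y\<bar> < \<bar>x\<bar> + 1" by (auto simp: dist_real_def)
      thus "G c y - G c 0 = g y" unfolding g_def c_def by (intro indep) auto
    qed auto
  qed
  moreover have "g 0 = 0" unfolding g_def by simp
  ultimately show ?thesis using that by blast
qed

lemma mono_lim_top:
  fixes g :: "real \<Rightarrow> real"
  assumes mono: "\<And>x y. x \<le> y \<Longrightarrow> g x \<le> g y" and bd: "\<And>x. 0 \<le> x \<Longrightarrow> g x \<le> B"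
  obtains L where "(g \<longlongrightarrow> L) at_top"
proof -
  have bdall: "g x \<le> B" for x
  proof (cases "0 \<le> x")
    case True thus ?thesis by (rule bd)
  next
    case False thus ?thesis using mono[of x 0] bd[of 0] by simp
  qed
  have bda: "bdd_above (range g)" using bdall by (intro bdd_aboveI[where M=B]) auto
  define L where "L = (SUP x. g x)"
  have "(g \<longlongrightarrow> L) at_top"
  proof (rule order_tendstoI)
    fix a assume "a < L"
    then obtain x0 where x0: "a < g x0" unfolding L_def using less_cSUP_iff[OF _ bda] by auto
    have "\<forall>\<^sub>F x in at_top. x0 \<le> x" by (rule eventually_ge_at_top)
    thus "\<forall>\<^sub>F x in at_top. a < g x"
      by (rule eventually_mono) (use x0 mono in \<open>fastforce intro: less_le_trans\<close>)
  next
    fix a assume "L < a"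
    thus "\<forall>\<^sub>F x in at_top. g x < a"
      using cSUP_upper[OF _ bda] unfolding L_def by (intro always_eventually allI) (meson UNIV_I le_less_trans)
  qed
  thus ?thesis using that by blast
qed

lemma mono_lim_bot:
  fixes g :: "real \<Rightarrow> real"
  assumes mono: "\<And>x y. x \<le> y \<Longrightarrow> g y \<le> g x" and bd: "\<And>x. x \<le> 0 \<Longrightarrow> g x \<le> B"
  obtains L where "(g \<longlongrightarrow> L) at_bot"
proof -
  obtain L where "((\<lambda>x. g (- x)) \<longlongrightarrow> L) at_top"
    by (rule mono_lim_top[of "\<lambda>x. g (- x)" B]) (use mono bd in auto)
  hence "(g \<longlongrightarrow> L) at_bot" by (simp add: filterlim_at_bot_mirror)
  thus ?thesis using that by blast
qed

lemma deriv_mono: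
  fixes g :: "real \<Rightarrow> real"
  assumes "a \<le> b" "\<And>x. a \<le> x \<Longrightarrow> x \<le> b \<Longrightarrow> (g has_real_derivative g' x) (at x)"
    "\<And>x. a \<le> x \<Longrightarrow> x \<le> b \<Longrightarrow> 0 \<le> g' x"
  shows "g a \<le> g b"
proof (rule DERIV_nonneg_imp_increasing_open[OF assms(1)])
  fix x assume "a < x" "x < b" thus "\<exists>y. DERIV g x :> y \<and> 0 \<le> y" using assms by force
next
  show "continuous_on {a..b} g"
    using assms(2) by (meson DERIV_continuous atLeastAtMost_iff continuous_at_imp_continuous_on)
qed

lemma deriv_antimono:
  fixes g :: "real \<Rightarrow> real"
  assumes "a \<le> b" "\<And>x. a \<le> x \<Longrightarrow> x \<le> b \<Longrightarrow> (g has_real_derivative g' x) (at x)"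
    "\<And>x. a \<le> x \<Longrightarrow> x \<le> b \<Longrightarrow> g' x \<le> 0"
  shows "g b \<le> g a"
  using deriv_mono[of a b "\<lambda>x. - g x" "\<lambda>x. - g' x"] assms
  by (auto intro: derivative_intros)


context prof begin

lemma ss_x: "x1 \<le> 1 - 2 * ss t" "1 - 2 * ss t \<le> x0" "0 < 1 - 2 * ss t"
  using ss_bounds[of t] s_facts x_facts by linarith+

lemma sg_facts: "0 < sg t" "sg t < 1" "sg t \<le> exp t" "1 - sg t \<le> exp (- t)" "1 - sg t = 1 / (1 + exp t)"
proof -
  have e: "0 < exp t" by simp
  have e1: "0 < 1 + exp t" using e by linarith
  show "0 < sg t" unfolding sg_def using e e1 by simp
  show "sg t < 1" unfolding sg_def using e e1 by (simp add: divide_less_eq)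
  have "exp t * 1 \<le> exp t * (1 + exp t)" using e by (intro mult_left_mono) auto
  thus "sg t \<le> exp t" unfolding sg_def using e1 by (simp add: divide_le_eq)
  have "1 / (1 + exp t) + exp t / (1 + exp t) = 1" using e1 by (simp add: add_divide_distrib[symmetric])
  thus q: "1 - sg t = 1 / (1 + exp t)" unfolding sg_def by linarith
  have "1 / (1 + exp t) \<le> 1 / exp t" using e e1 by (intro divide_left_mono mult_pos_pos) auto
  thus "1 - sg t \<le> exp (- t)" unfolding q by (simp add: exp_minus field_simps)
qed

lemma sg_deriv: "(sg has_real_derivative sg t * (1 - sg t)) (at t)"
proof -
  have "(sg has_real_derivative (exp t * (1 + exp t) - exp t * exp t) / (1 + exp t)^2) (at t)"
    unfolding sg_def by (auto intro!: derivative_eq_intros simp: power2_eq_square add_pos_pos)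
      (smt (verit) exp_gt_zero)
  moreover have "(exp t * (1 + exp t) - exp t * exp t) / (1 + exp t)^2 = sg t * (1 - sg t)"
    unfolding sg_facts(5) unfolding sg_def by (simp add: field_simps power2_eq_square)
  ultimately show ?thesis by simp
qed

lemma sg_strict: "a < b \<Longrightarrow> sg a < sg b"
proof -
  assume ab: "a < b"
  have p: "0 < 1 + exp a" "0 < 1 + exp b" by (auto intro: add_pos_pos)
  have "1 / (1 + exp b) < 1 / (1 + exp a)"
    using ab p by (intro divide_strict_left_mono) auto
  thus ?thesis using sg_facts(5)[of a] sg_facts(5)[of b] by linarith
qed

definition ff :: "real \<Rightarrow> real" where "ff t = \<beta> / (1 - 2 * ss t)"

lemma ff_cont: "continuous_on UNIV ff"
  unfolding ff_def using ss_x by (intro continuous_intros ss_cont) (auto simp: less_le)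

lemma ff_bounds: "\<beta> \<le> ff t" "ff t \<le> \<beta> / x1" "0 < ff t"
proof -
  have z: "0 \<le> ss t" using ss_bounds(1)[of t] s_facts(1) by linarith
  have a: "0 < 1 - 2 * ss t" "1 - 2 * ss t \<le> 1" "x1 \<le> 1 - 2 * ss t" using ss_x z by auto
  show "\<beta> \<le> ff t" unfolding ff_def using a bpos by (simp add: field_simps)
  show "ff t \<le> \<beta> / x1" unfolding ff_def using a bpos x_facts by (intro divide_left_mono) auto
  show "0 < ff t" unfolding ff_def using a bpos by simp
qed

definition th0 :: "real \<Rightarrow> real" where
  "th0 = (SOME g. (\<forall>x. (g has_real_derivative ff x) (at x)) \<and> g 0 = 0)"

lemma th0: "(th0 has_real_derivative ff x) (at x)" "th0 0 = 0"
proof -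
  obtain g where "\<And>x. (g has_real_derivative ff x) (at x)" "g 0 = 0"
    using antideriv_R[OF ff_cont] by blast
  hence "\<exists>g. (\<forall>x. (g has_real_derivative ff x) (at x)) \<and> g 0 = 0" by blast
  from someI_ex[OF this] show "(th0 has_real_derivative ff x) (at x)" "th0 0 = 0"
    unfolding th0_def by auto
qed

lemma g0_deriv: "((\<lambda>t. t - \<alpha> * th0 t) has_real_derivative 1 - \<alpha> * ff t) (at t)"
  by (auto intro!: derivative_eq_intros th0)

lemma g0_db: "1 - \<alpha> * ff t \<le> 0" "- (2 / (mm * x1)) * exp t \<le> 1 - \<alpha> * ff t"
proof -
  have a: "0 < 1 - 2 * ss t" "1 - 2 * ss t \<le> x0" "x1 \<le> 1 - 2 * ss t" using ss_x by auto
  have eq0: "1 - \<alpha> * ff t = - (2 * (ss t - s0)) / (1 - 2 * ss t)"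
    unfolding ff_def using a by (simp add: field_simps x0_def s0_def)
  have eq: "1 - \<alpha> * ff t = - (2 * (ss t - s0) / (1 - 2 * ss t))"
    unfolding eq0 by (simp only: minus_divide_left)
  have "0 \<le> 2 * (ss t - s0) / (1 - 2 * ss t)" using a ss_bounds by (intro divide_nonneg_pos) auto
  thus "1 - \<alpha> * ff t \<le> 0" unfolding eq by simp
  have b: "ss t - s0 \<le> exp t / mm"
    using ss_bounds(3)[of t] sg_facts(3)[of t] m_facts by (smt (verit) divide_right_mono)
  have "2 * (ss t - s0) / (1 - 2 * ss t) \<le> 2 * (ss t - s0) / x1"
    using a ss_bounds x_facts by (intro divide_left_mono) auto
  also have "\<dots> \<le> 2 * (exp t / mm) / x1" using b x_facts by (intro divide_right_mono) auto
  also have "\<dots> = (2 / (mm * x1)) * exp t" by simp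
  finally have "2 * (ss t - s0) / (1 - 2 * ss t) \<le> (2 / (mm * x1)) * exp t" .
  thus "- (2 / (mm * x1)) * exp t \<le> 1 - \<alpha> * ff t" unfolding eq by simp
qed

lemma g0_lim: "\<exists>L. ((\<lambda>t. t - \<alpha> * th0 t) \<longlongrightarrow> L) at_bot"
proof -
  define c where "c = 2 / (mm * x1)"
  have "\<exists>L. ((\<lambda>t. t - \<alpha> * th0 t) \<longlongrightarrow> L) at_bot"
  proof (rule mono_lim_bot[of "\<lambda>t. t - \<alpha> * th0 t" c])
    fix x y :: real assume "x \<le> y"
    thus "y - \<alpha> * th0 y \<le> x - \<alpha> * th0 x"
      by (rule deriv_antimono[OF _ g0_deriv g0_db(1)])
  next
    fix x :: real assume x: "x \<le> 0"
    have "(x - \<alpha> * th0 x) + c * exp x \<le> (0 - \<alpha> * th0 0) + c * exp 0"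
    proof (rule deriv_mono[OF x, of _ "\<lambda>t. 1 - \<alpha> * ff t + c * exp t"])
      fix t :: real
      show "((\<lambda>t. t - \<alpha> * th0 t + c * exp t) has_real_derivative 1 - \<alpha> * ff t + c * exp t) (at t)"
        by (auto intro!: derivative_eq_intros th0)
      show "0 \<le> 1 - \<alpha> * ff t + c * exp t" using g0_db(2)[of t] unfolding c_def by linarith
    qed
    moreover have "0 \<le> c * exp x" unfolding c_def using m_facts x_facts by simp
    ultimately show "x - \<alpha> * th0 x \<le> c" using th0(2) by simp
  qed auto
  thus ?thesis .
qed

lemma negF:
  assumes "s0 \<le> s" "s \<le> s1" "0 \<le> p" "p \<le> 1"
  shows "- FF p s \<le> - mm * (s1 - s) + (1 - p)"
proof -
  have n: "1 - 2 * s \<noteq> 0" "1 - 2 * s1 \<noteq> 0" using assms s_facts by linarith+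
  have d: "FF 1 s1 - FF 1 s = - (s1 - s) * ((1 - 2 * 1) + \<beta> / ((1 - 2 * s) * (1 - 2 * s1)))"
    by (rule F_diff[OF n])
  have c: "mm \<le> (1 - 2 * 1) + \<beta> / ((1 - 2 * s) * (1 - 2 * s1))"
    using coef_bounds(1)[of s s1 1] assms s_facts by simp
  define K where "K = (1 - 2 * 1) + \<beta> / ((1 - 2 * s) * (1 - 2 * s1))"
  have d': "FF 1 s1 - FF 1 s = - ((s1 - s) * K)" unfolding K_def by (simp only: d minus_mult_left)
  have d'': "FF 1 s = (s1 - s) * K" using d' F1 by linarith
  have "mm * (s1 - s) \<le> K * (s1 - s)"
    using c assms unfolding K_def by (intro mult_right_mono) auto
  hence F1s: "mm * (s1 - s) \<le> FF 1 s" unfolding d'' by (simp add: mult.commute)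
  have "2 * (1 - p) * s \<le> (1 - p)"
  proof -
    have "(1 - p) * (2 * s) \<le> (1 - p) * 1" using assms s_facts by (intro mult_left_mono) auto
    thus ?thesis by (simp add: mult_ac)
  qed
  thus ?thesis using F_p1[of p s] F1s by linarith
qed

definition gam where "gam = min mm 1 / 2"

lemma gam: "0 < gam" "gam < mm" "gam < 1"
  using m_facts unfolding gam_def by auto

lemma e_bound: "\<exists>C. \<forall>t\<ge>0. s1 - ss t \<le> C * exp (- gam * t)"
proof -
  define k1 where "k1 = 1 / (1 - gam)"
  define psi where "psi t = exp (gam * t) * (s1 - ss t) + k1 * exp ((gam - 1) * t)" for t
  define dpsi where "dpsi t = gam * exp (gam * t) * (s1 - ss t) + exp (gam * t) * (- FF (sg t) (ss t))
       + k1 * ((gam - 1) * exp ((gam - 1) * t))" for t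
  have dp: "(psi has_real_derivative dpsi t) (at t)" for t
    unfolding psi_def dpsi_def by (auto intro!: derivative_eq_intros ss_deriv simp: algebra_simps)
  have dn: "dpsi t \<le> 0" for t
  proof -
    have "- FF (sg t) (ss t) \<le> - mm * (s1 - ss t) + (1 - sg t)"
      by (rule negF[OF ss_bounds(1) ss_bounds(2) less_imp_le[OF sg_facts(1)] less_imp_le[OF sg_facts(2)]])
    also have "\<dots> \<le> - mm * (s1 - ss t) + exp (- t)" using sg_facts by simp
    finally have f: "- FF (sg t) (ss t) \<le> - mm * (s1 - ss t) + exp (- t)" .
    define E where "E = exp (gam * t)"
    define Q where "Q = exp ((gam - 1) * t)"
    define e where "e = s1 - ss t"
    have A1: "E * (- FF (sg t) (ss t)) \<le> E * (- mm * e + exp (- t))"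
      using f unfolding E_def e_def by (intro mult_left_mono) auto
    have A2: "E * (- mm * e + exp (- t)) = - mm * (E * e) + E * exp (- t)" by (simp add: algebra_simps)
    have A3: "E * exp (- t) = Q" unfolding E_def Q_def by (simp add: exp_add[symmetric] algebra_simps)
    have g1: "1 - gam \<noteq> 0" using gam by simp
    have A4: "k1 * ((gam - 1) * Q) = - Q"
    proof -
      have "(gam - 1) * Q = - Q * (1 - gam)" by (simp add: algebra_simps)
      thus ?thesis using g1 unfolding k1_def by simp
    qed
    have A5: "(gam - mm) * (E * e) \<le> 0"
      using gam ss_bounds unfolding E_def e_def by (intro mult_nonpos_nonneg) auto
    have A6: "(gam - mm) * (E * e) = gam * (E * e) - mm * (E * e)" by (simp add: algebra_simps)
    have A7: "gam * E * e = gam * (E * e)" by (simp add: algebra_simps)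
    have A8: "- mm * (E * e) = - (mm * (E * e))" by simp
    have "dpsi t = gam * E * e + E * (- FF (sg t) (ss t)) + k1 * ((gam - 1) * Q)"
      unfolding dpsi_def E_def Q_def e_def ..
    thus ?thesis using A1 A2 A3 A4 A5 A6 A7 A8 by linarith
  qed
  define C where "C = psi 0"
  have "s1 - ss t \<le> C * exp (- gam * t)" if t: "t \<ge> 0" for t
  proof -
    have "psi t \<le> psi 0" by (rule deriv_antimono[OF t dp dn])
    moreover have "0 \<le> k1 * exp ((gam - 1) * t)" using gam unfolding k1_def by simp
    ultimately have "exp (gam * t) * (s1 - ss t) \<le> C" unfolding C_def psi_def by linarith
    hence "exp (- gam * t) * (exp (gam * t) * (s1 - ss t)) \<le> exp (- gam * t) * C"
      by (intro mult_left_mono) auto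
    hence i1: "(exp (- gam * t) * exp (gam * t)) * (s1 - ss t) \<le> C * exp (- gam * t)" by (simp add: mult_ac)
    have "exp (- gam * t) * exp (gam * t) = 1" by (simp add: exp_add[symmetric])
    hence i2: "(exp (- gam * t) * exp (gam * t)) * (s1 - ss t) = s1 - ss t" by (simp only: mult_1_left)
    show ?thesis using i1 i2 by linarith
  qed
  thus ?thesis by blast
qed

lemma g1_deriv: "((\<lambda>t. t - \<alpha>h * th0 t) has_real_derivative 1 - \<alpha>h * ff t) (at t)"
  by (auto intro!: derivative_eq_intros th0)

lemma g1_eq: "1 - \<alpha>h * ff t = 2 * (s1 - ss t) / (1 - 2 * ss t)"
  unfolding ff_def using ss_x(3)[of t] by (simp add: field_simps x1_def s1_def)

lemma g1_lim: "\<exists>L. ((\<lambda>t. t - \<alpha>h * th0 t) \<longlongrightarrow> L) at_top"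
proof -
  obtain C where C: "\<And>t. t \<ge> 0 \<Longrightarrow> s1 - ss t \<le> C * exp (- gam * t)" using e_bound by blast
  define c where "c = 2 * C / (x1 * gam)"
  have nn: "0 \<le> 1 - \<alpha>h * ff t" for t unfolding g1_eq using ss_bounds ss_x by (intro divide_nonneg_pos) auto
  have ub: "1 - \<alpha>h * ff t \<le> (2 * C / x1) * exp (- gam * t)" if "t \<ge> 0" for t
  proof -
    have "2 * (s1 - ss t) / (1 - 2 * ss t) \<le> 2 * (s1 - ss t) / x1"
      using ss_x ss_bounds x_facts by (intro divide_left_mono) auto
    also have "\<dots> \<le> 2 * (C * exp (- gam * t)) / x1" using C[OF that] x_facts by (intro divide_right_mono) auto
    finally show ?thesis unfolding g1_eq by simp
  qed
  show ?thesis
  proof (rule mono_lim_top[of "\<lambda>t. t - \<alpha>h * th0 t" c])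
    fix x y :: real assume "x \<le> y"
    thus "x - \<alpha>h * th0 x \<le> y - \<alpha>h * th0 y" by (rule deriv_mono[OF _ g1_deriv nn])
  next
    fix x :: real assume x: "0 \<le> x"
    have "(x - \<alpha>h * th0 x) + c * exp (- gam * x) \<le> (0 - \<alpha>h * th0 0) + c * exp (- gam * 0)"
    proof (rule deriv_antimono[OF x, of _ "\<lambda>t. 1 - \<alpha>h * ff t + c * (exp (- gam * t) * (- gam))"])
      fix t :: real assume "0 \<le> t" "t \<le> x"
      show "((\<lambda>t. t - \<alpha>h * th0 t + c * exp (- gam * t)) has_real_derivative
          1 - \<alpha>h * ff t + c * (exp (- gam * t) * (- gam))) (at t)"
        by (auto intro!: derivative_eq_intros th0)
      have "c * (exp (- gam * t) * (- gam)) = - (2 * C / x1) * exp (- gam * t)"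
        unfolding c_def using gam x_facts by (simp add: field_simps)
      thus "1 - \<alpha>h * ff t + c * (exp (- gam * t) * (- gam)) \<le> 0" using ub[OF \<open>0 \<le> t\<close>] by simp
    qed
    moreover have "0 \<le> c * exp (- gam * x)"
    proof -
      have "0 \<le> s1 - ss 0" using ss_bounds by simp
      hence "0 \<le> C" using C[of 0] by simp
      thus ?thesis unfolding c_def using x_facts gam by simp
    qed
    ultimately show "x - \<alpha>h * th0 x \<le> c" using th0(2) by simp
  qed auto
qed

end


context prof begin

definition "L0 = (SOME L. ((\<lambda>t. t - \<alpha> * th0 t) \<longlongrightarrow> L) at_bot)"
definition "L1 = (SOME L. ((\<lambda>t. t - \<alpha>h * th0 t) \<longlongrightarrow> L) at_top)"

lemma L0: "((\<lambda>t. t - \<alpha> * th0 t) \<longlongrightarrow> L0) at_bot"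
  unfolding L0_def by (rule someI_ex[OF g0_lim])
lemma L1: "((\<lambda>t. t - \<alpha>h * th0 t) \<longlongrightarrow> L1) at_top"
  unfolding L1_def by (rule someI_ex[OF g1_lim])

definition th :: "real \<Rightarrow> real" where "th t = th0 t + L0 / \<alpha>"

lemma th_deriv: "(th has_real_derivative ff t) (at t)"
  unfolding th_def by (auto intro!: derivative_eq_intros th0)

lemma th_isCont: "isCont th t" using th_deriv by (rule DERIV_isCont)

lemma th_cont: "continuous_on U th"
  using th_isCont by (simp add: continuous_at_imp_continuous_on)

lemma th_lim0: "((\<lambda>t. t - \<alpha> * th t) \<longlongrightarrow> 0) at_bot"
proof -
  have "((\<lambda>t. (t - \<alpha> * th0 t) - L0) \<longlongrightarrow> L0 - L0) at_bot" by (intro tendsto_intros L0)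
  moreover have "(t - \<alpha> * th0 t) - L0 = t - \<alpha> * th t" for t
    unfolding th_def using a0 by (simp add: algebra_simps)
  ultimately show ?thesis by simp
qed

lemma th_lim1: "((\<lambda>t. t - \<alpha>h * th t) \<longlongrightarrow> L1 - \<alpha>h * L0 / \<alpha>) at_top"
proof -
  have "((\<lambda>t. (t - \<alpha>h * th0 t) - \<alpha>h * L0 / \<alpha>) \<longlongrightarrow> L1 - \<alpha>h * L0 / \<alpha>) at_top" by (intro tendsto_intros L1)
  moreover have "(t - \<alpha>h * th0 t) - \<alpha>h * L0 / \<alpha> = t - \<alpha>h * th t" for t
    unfolding th_def using a0 by (simp add: algebra_simps)
  ultimately show ?thesis by simp
qed

lemma th_strict: "a < b \<Longrightarrow> th a < th b"
proof -
  assume ab: "a < b"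
  show ?thesis by (rule DERIV_pos_imp_increasing[of a b th]) (use ab th_deriv ff_bounds(3) in auto)
qed

lemma th_le_iff: "th a \<le> th b \<longleftrightarrow> a \<le> b"
proof
  assume h: "th a \<le> th b"
  show "a \<le> b"
  proof (rule ccontr)
    assume "\<not> a \<le> b" hence "b < a" by simp
    hence "th b < th a" by (rule th_strict)
    thus False using h by simp
  qed
next
  assume "a \<le> b"
  thus "th a \<le> th b" using th_strict[of a b] by (cases "a = b") auto
qed

lemma th_inj: "inj th"
  by (rule injI) (metis antisym th_le_iff order_refl)

lemma th_lin1: "0 \<le> t \<Longrightarrow> th 0 + \<beta> * t \<le> th t"
proof -
  assume t: "0 \<le> t"
  have "th 0 - \<beta> * 0 \<le> th t - \<beta> * t"
    by (rule deriv_mono[OF t, of _ "\<lambda>x. ff x - \<beta>"]) (auto intro!: derivative_eq_intros th_deriv simp: ff_bounds)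
  thus ?thesis by simp
qed

lemma th_lin2: "t \<le> 0 \<Longrightarrow> th t \<le> th 0 + \<beta> * t"
proof -
  assume t: "t \<le> 0"
  have "th t - \<beta> * t \<le> th 0 - \<beta> * 0"
    by (rule deriv_mono[OF t, of _ "\<lambda>x. ff x - \<beta>"]) (auto intro!: derivative_eq_intros th_deriv simp: ff_bounds)
  thus ?thesis by simp
qed

lemma th_surj: "surj th"
proof -
  have "\<exists>t. th t = y" for y
  proof -
    define d where "d = (y - th 0) / \<beta>"
    define a where "a = min 0 d"
    define b where "b = max 0 d"
    have "th a \<le> th 0 + \<beta> * a" by (rule th_lin2) (simp add: a_def)
    also have "\<dots> \<le> y" unfolding a_def d_def using bpos
      by (cases "0 \<le> (y - th 0) / \<beta>") (auto simp: field_simps min_def)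
    finally have ya: "th a \<le> y" .
    have "y \<le> th 0 + \<beta> * b" unfolding b_def d_def using bpos
      by (cases "0 \<le> (y - th 0) / \<beta>") (auto simp: field_simps max_def)
    also have "\<dots> \<le> th b" by (rule th_lin1) (simp add: b_def)
    finally have yb: "y \<le> th b" .
    have ab: "a \<le> b" by (simp add: a_def b_def)
    obtain x where "th x = y" using IVT'[OF ya yb ab th_cont] by blast
    thus ?thesis by blast
  qed
  thus ?thesis by (metis surjI)
qed

definition TT :: "real \<Rightarrow> real" where "TT y = inv th y"

lemma th_TT: "th (TT y) = y" unfolding TT_def by (rule surj_f_inv_f[OF th_surj])
lemma TT_th: "TT (th t) = t" unfolding TT_def by (rule inv_f_f[OF th_inj])

lemma TT_le_iff: "TT a \<le> TT b \<longleftrightarrow> a \<le> b"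
  by (metis th_TT th_le_iff)

lemma TT_strict: "a < b \<Longrightarrow> TT a < TT b"
  by (meson TT_le_iff not_le)

lemma TT_isCont: "isCont TT y"
proof -
  have "isCont TT (th (TT y))"
    by (rule isCont_inverse_function[where d=1]) (auto simp: TT_th th_isCont)
  thus ?thesis by (simp add: th_TT)
qed

lemma TT_deriv: "(TT has_real_derivative inverse (ff (TT y))) (at y)"
proof (rule DERIV_inverse_function[where f=th and g=TT and a="y - 1" and b="y + 1"])
  show "(th has_real_derivative ff (TT y)) (at (TT y))" by (rule th_deriv)
  show "ff (TT y) \<noteq> 0" using ff_bounds(3)[of "TT y"] by linarith
  show "y - 1 < y" "y < y + 1" by auto
  show "isCont TT y" by (rule TT_isCont)
  fix z show "th (TT z) = z" by (rule th_TT)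
qed

lemma TT_bot: "filterlim TT at_bot at_bot"
  unfolding filterlim_at_bot
proof
  fix Z
  have "\<forall>\<^sub>F y in at_bot. y \<le> th Z" by (rule eventually_le_at_bot)
  thus "\<forall>\<^sub>F y in at_bot. TT y \<le> Z" by eventually_elim (metis TT_le_iff TT_th)
qed

lemma TT_top: "filterlim TT at_top at_top"
  unfolding filterlim_at_top
proof
  fix Z
  have "\<forall>\<^sub>F y in at_top. th Z \<le> y" by (rule eventually_ge_at_top)
  thus "\<forall>\<^sub>F y in at_top. Z \<le> TT y" by eventually_elim (metis TT_le_iff TT_th)
qed

definition uu :: "real \<Rightarrow> real" where "uu z = sg (TT (ln z))"

lemma lnTT_bot: "filterlim (\<lambda>z. TT (ln z)) at_bot (at_right 0)"
  by (rule filterlim_compose[OF TT_bot ln_at_0])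

lemma lnTT_top: "filterlim (\<lambda>z. TT (ln z)) at_top at_top"
  by (rule filterlim_compose[OF TT_top ln_at_top])

lemma u_asym0: "uu \<sim>[at_right 0] (\<lambda>z. z powr \<alpha>)"
proof (rule asymp_equivI')
  define phi where "phi t = sg t / exp (\<alpha> * th t)" for t
  have e1: "phi t = (1 / (1 + exp t)) * exp (t - \<alpha> * th t)" for t
    unfolding phi_def sg_def by (simp add: exp_diff field_simps)
  have l1: "((\<lambda>t::real. 1 / (1 + exp t)) \<longlongrightarrow> 1) at_bot" by real_asymp
  have lexp: "((\<lambda>t. exp (t - \<alpha> * th t)) \<longlongrightarrow> exp 0) at_bot" by (rule tendsto_exp[OF th_lim0])
  have phieq: "phi = (\<lambda>t. (1 / (1 + exp t)) * exp (t - \<alpha> * th t))" by (rule ext) (rule e1)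
  have "((\<lambda>t. (1 / (1 + exp t)) * exp (t - \<alpha> * th t)) \<longlongrightarrow> 1 * exp 0) at_bot"
    by (rule tendsto_mult[OF l1 lexp])
  hence lphi: "(phi \<longlongrightarrow> 1) at_bot" unfolding phieq by simp
  have "((\<lambda>z. phi (TT (ln z))) \<longlongrightarrow> 1) (at_right 0)"
    by (rule filterlim_compose[OF lphi lnTT_bot])
  moreover have "\<forall>\<^sub>F z in at_right 0. phi (TT (ln z)) = uu z / z powr \<alpha>"
    using eventually_at_right_less[of "0::real"]
    by eventually_elim (simp add: phi_def uu_def powr_def th_TT mult.commute)
  ultimately show "((\<lambda>z. uu z / z powr \<alpha>) \<longlongrightarrow> 1) (at_right 0)"
    by (rule Lim_transform_eventually)
qed

lemma u_asym1: "\<exists>ch. (\<lambda>z. 1 - uu z) \<sim>[at_top] (\<lambda>z. ch * z powr (- \<alpha>h))"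
proof -
  define c where "c = exp (- (L1 - \<alpha>h * L0 / \<alpha>))"
  define phi where "phi t = (1 - sg t) * exp (\<alpha>h * th t)" for t
  have e1: "phi t = (exp t / (1 + exp t)) * exp (- (t - \<alpha>h * th t))" for t
  proof -
    have p: "0 < 1 + exp t" by (auto intro: add_pos_pos)
    have "- (t - \<alpha>h * th t) = \<alpha>h * th t - t" by simp
    hence q: "exp (- (t - \<alpha>h * th t)) = exp (\<alpha>h * th t) / exp t" by (simp only: exp_diff)
    have "exp t / (1 + exp t) * (exp (\<alpha>h * th t) / exp t) = (exp t * exp (\<alpha>h * th t)) / (exp t * (1 + exp t))"
      by (simp add: mult.commute)
    also have "\<dots> = exp (\<alpha>h * th t) / (1 + exp t)" by simp
    finally show ?thesis unfolding phi_def sg_facts(5) q by simp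
  qed
  have l1: "((\<lambda>t::real. exp t / (1 + exp t)) \<longlongrightarrow> 1) at_top" by real_asymp
  have lexp: "((\<lambda>t. exp (- (t - \<alpha>h * th t))) \<longlongrightarrow> c) at_top" unfolding c_def by (rule tendsto_exp[OF tendsto_minus[OF th_lim1]])
  have phieq: "phi = (\<lambda>t. (exp t / (1 + exp t)) * exp (- (t - \<alpha>h * th t)))" by (rule ext) (rule e1)
  have "((\<lambda>t. (exp t / (1 + exp t)) * exp (- (t - \<alpha>h * th t))) \<longlongrightarrow> 1 * c) at_top"
    by (rule tendsto_mult[OF l1 lexp])
  hence lphi: "(phi \<longlongrightarrow> c) at_top" unfolding phieq by simp
  have "((\<lambda>z. phi (TT (ln z))) \<longlongrightarrow> c) at_top"
    by (rule filterlim_compose[OF lphi lnTT_top])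
  moreover have "\<forall>\<^sub>F z in at_top. phi (TT (ln z)) = (1 - uu z) / z powr (- \<alpha>h)"
    using eventually_gt_at_top[of "0::real"]
    by eventually_elim (simp add: phi_def uu_def powr_def th_TT exp_minus mult.commute divide_inverse)
  ultimately have "((\<lambda>z. (1 - uu z) / z powr (- \<alpha>h)) \<longlongrightarrow> c) at_top"
    by (rule Lim_transform_eventually)
  hence "(\<lambda>z. 1 - uu z) \<sim>[at_top] (\<lambda>z. c * z powr (- \<alpha>h))"
    by (rule asymp_equivI'_const) (simp add: c_def)
  thus ?thesis by blast
qed

end


context prof begin

definition PP :: "real \<Rightarrow> real" where "PP t = sg t - sg t * (1 - sg t) * ss t"

lemma PP_deriv: "(PP has_real_derivative sg t * (1 - sg t) * (\<beta> * ss t / (1 - 2 * ss t))) (at t)"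
proof -
  have "(PP has_real_derivative
     sg t * (1 - sg t) - ((sg t * (1 - sg t) * (1 - sg t) + sg t * (- (sg t * (1 - sg t)))) * ss t
       + sg t * (1 - sg t) * FF (sg t) (ss t))) (at t)"
    unfolding PP_def by (rule derivative_eq_intros sg_deriv ss_deriv refl | simp)+
  moreover have "sg t * (1 - sg t) - ((sg t * (1 - sg t) * (1 - sg t) + sg t * (- (sg t * (1 - sg t)))) * ss t
       + sg t * (1 - sg t) * FF (sg t) (ss t)) = sg t * (1 - sg t) * (\<beta> * ss t / (1 - 2 * ss t))"
    unfolding FF_def by (simp add: algebra_simps)
  ultimately show ?thesis by simp
qed

lemma PP_bounds: "0 \<le> PP t" "PP t \<le> sg t"
proof -
  have b: "0 \<le> 1 - sg t" "1 - sg t \<le> 1" "0 \<le> ss t" "ss t \<le> 1"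
    using sg_facts(1,2)[of t] ss_bounds(1,2)[of t] s_facts by linarith+
  have a: "0 \<le> (1 - sg t) * ss t" "(1 - sg t) * ss t \<le> 1"
    using b by (auto intro: mult_le_one)
  have e: "PP t = sg t * (1 - (1 - sg t) * ss t)" unfolding PP_def by (simp add: algebra_simps)
  show "0 \<le> PP t" unfolding e using a sg_facts(1)[of t] by simp
  show "PP t \<le> sg t" unfolding e using a sg_facts(1)[of t] by (simp add: mult_le_cancel_left1)
qed

definition Du :: "real \<Rightarrow> real" where
  "Du z = sg (TT (ln z)) * (1 - sg (TT (ln z))) * (inverse (ff (TT (ln z))) * (1 / z))"

lemma lnTT_deriv: "z > 0 \<Longrightarrow> ((\<lambda>z. TT (ln z)) has_real_derivative inverse (ff (TT (ln z))) * (1 / z)) (at z)"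
  by (rule DERIV_chain2[OF TT_deriv DERIV_ln_divide])

lemma u_deriv: "z > 0 \<Longrightarrow> (uu has_real_derivative Du z) (at z)"
  unfolding uu_def Du_def by (rule DERIV_chain2[OF sg_deriv lnTT_deriv])

definition Ps :: "real \<Rightarrow> real" where "Ps x = (if x \<le> 0 then 0 else x * PP (TT (ln x)))"

lemma Ps_deriv:
  assumes x: "x > 0"
  shows "(Ps has_real_derivative uu x) (at x)"
proof -
  define t where "t = TT (ln x)"
  have d: "((\<lambda>x. x * PP (TT (ln x))) has_real_derivative
      1 * PP t + (sg t * (1 - sg t) * (\<beta> * ss t / (1 - 2 * ss t)) * (inverse (ff t) * (1 / x))) * x) (at x)"
    unfolding t_def by (rule DERIV_mult[OF DERIV_ident DERIV_chain2[OF PP_deriv lnTT_deriv[OF x]]])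
  have n: "1 - 2 * ss t \<noteq> 0" using ss_x(3)[of t] by linarith
  have "1 * PP t + (sg t * (1 - sg t) * (\<beta> * ss t / (1 - 2 * ss t)) * (inverse (ff t) * (1 / x))) * x
      = sg t"
    unfolding PP_def ff_def using x n bpos by (simp add: field_simps)
  hence d2: "((\<lambda>x. x * PP (TT (ln x))) has_real_derivative uu x) (at x)"
    using d unfolding uu_def t_def by simp
  show ?thesis
    by (rule has_field_derivative_transform_within_open[OF d2, of "{0<..}"]) (use x in \<open>auto simp: Ps_def\<close>)
qed

lemma Ps_cont: "continuous_on {0..z} Ps"
proof -
  have "continuous (at x within {0..z}) Ps" if x: "x \<in> {0..z}" for x
  proof (cases "x = 0")
    case True
    have "(Ps \<longlongrightarrow> 0) (at 0 within {0..z})"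
    proof (rule Lim_null_comparison)
      show "\<forall>\<^sub>F y in at 0 within {0..z}. norm (Ps y) \<le> \<bar>y\<bar>"
      proof (intro always_eventually allI)
        fix y :: real
        show "norm (Ps y) \<le> \<bar>y\<bar>"
        proof (cases "y \<le> 0")
          case False
          have "PP (TT (ln y)) \<le> 1" using PP_bounds(2) sg_facts(2) by (smt (verit))
          moreover have "0 \<le> PP (TT (ln y))" by (rule PP_bounds(1))
          ultimately show ?thesis using False by (simp add: Ps_def abs_mult mult_left_le)
        qed (simp add: Ps_def)
      qed
      show "((\<lambda>y. \<bar>y\<bar>) \<longlongrightarrow> 0) (at 0 within {0..z})"
        by (rule tendsto_eq_intros tendsto_ident_at | simp)+
    qed
    thus ?thesis using True by (simp add: continuous_within Ps_def)
  next
    case False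
    hence "x > 0" using x by auto
    hence "isCont Ps x" using Ps_deriv DERIV_isCont by blast
    thus ?thesis by (rule continuous_at_imp_continuous_within)
  qed
  thus ?thesis by (simp add: continuous_on_eq_continuous_within)
qed

lemma u_int:
  assumes z: "z > 0"
  shows "((\<lambda>r. uu (z * r)) has_integral PP (TT (ln z))) {0..1}"
proof -
  have "(uu has_integral (Ps z - Ps 0)) {0..z}"
  proof (rule fundamental_theorem_of_calculus_interior)
    show "0 \<le> z" using z by simp
    show "continuous_on {0..z} Ps" by (rule Ps_cont)
    fix x assume "x \<in> {0<..<z}"
    hence "x > 0" by simp
    thus "(Ps has_vector_derivative uu x) (at x)"
      using Ps_deriv has_real_derivative_iff_has_vector_derivative by blast
  qed
  hence i: "(uu has_integral z * PP (TT (ln z))) {0..z}" using z by (simp add: Ps_def)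
  have "((\<lambda>x. uu (z * x)) has_integral (1 / \<bar>z\<bar>) *\<^sub>R (z * PP (TT (ln z)))) ((\<lambda>x. x / z) ` {0..z})"
    by (rule has_integral_stretch_real[OF i]) (use z in simp)
  moreover have "(\<lambda>x. x / z) ` {0..z} = {0..1}" using z by simp
  ultimately show ?thesis using z by simp
qed

lemma sg_lim_bot: "(sg \<longlongrightarrow> 0) at_bot"
proof -
  have "((\<lambda>t::real. exp t / (1 + exp t)) \<longlongrightarrow> 0) at_bot" by real_asymp
  thus ?thesis unfolding sg_def[abs_def] .
qed

lemma sg_lim_top: "(sg \<longlongrightarrow> 1) at_top"
proof -
  have "((\<lambda>t::real. exp t / (1 + exp t)) \<longlongrightarrow> 1) at_top" by real_asymp
  thus ?thesis unfolding sg_def[abs_def] .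
qed

lemma uu_profile: "is_profile \<beta> uu"
  unfolding is_profile_def
proof (intro conjI allI impI)
  fix z :: real assume z: "0 < z"
  show "uu differentiable at z" using u_deriv[OF z] real_differentiable_def by blast
  show "(\<lambda>r. uu (z * r)) integrable_on {0..1}" using u_int[OF z] by blast
  define t where "t = TT (ln z)"
  have dd: "deriv uu z = Du z" by (rule DERIV_imp_deriv[OF u_deriv[OF z]])
  have ii: "integral {0..1} (\<lambda>r. uu (z * r)) = PP t" unfolding t_def by (rule integral_unique[OF u_int[OF z]])
  have n: "1 - 2 * ss t \<noteq> 0" using ss_x(3)[of t] by linarith
  have "\<beta> * z * Du z = sg t * (1 - sg t) * (1 - 2 * ss t)"
    unfolding Du_def t_def[symmetric] ff_def using z bpos n by (simp add: field_simps)
  thus "\<beta> * z * deriv uu z + (uu z)\<^sup>2 + uu z = 2 * integral {0..1} (\<lambda>r. uu (z * r))"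
    unfolding dd ii unfolding uu_def t_def[symmetric] PP_def by (simp add: algebra_simps power2_eq_square)
next
  fix z :: real assume "0 < z"
  show "0 < uu z" unfolding uu_def by (rule sg_facts(1))
next
  show "strict_mono_on {0<..} uu"
    unfolding strict_mono_on_def uu_def by (auto intro!: sg_strict TT_strict)
next
  show "(uu \<longlongrightarrow> 0) (at_right 0)"
    unfolding uu_def[abs_def] by (rule filterlim_compose[OF sg_lim_bot lnTT_bot])
next
  show "(uu \<longlongrightarrow> 1) at_top"
    unfolding uu_def[abs_def] by (rule filterlim_compose[OF sg_lim_top lnTT_top])
qed

end


context prof begin

lemma sg_logit: "0 < v \<Longrightarrow> v < 1 \<Longrightarrow> sg (ln (v / (1 - v))) = v"
  unfolding sg_def by (simp add: field_simps)

lemma uniq: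
  assumes prof: "is_profile \<beta> v"
  shows "\<exists>c>0. \<forall>z>0. v z = uu (c * z)"
proof -
  have eqn: "\<And>z. z > 0 \<Longrightarrow> v differentiable (at z) \<and> (\<lambda>r. v (z * r)) integrable_on {0..1}
            \<and> \<beta> * z * deriv v z + (v z)\<^sup>2 + v z = 2 * integral {0..1} (\<lambda>r. v (z * r))"
    and vpos: "\<And>z. z > 0 \<Longrightarrow> v z > 0"
    and vmono: "strict_mono_on {0<..} v"
    and v0: "(v \<longlongrightarrow> 0) (at_right 0)"
    and v1: "(v \<longlongrightarrow> 1) at_top"
    using prof unfolding is_profile_def by auto
  have vlt: "a < b \<Longrightarrow> 0 < a \<Longrightarrow> v a < v b" for a b
    using vmono unfolding strict_mono_on_def by auto
  have vle: "a \<le> b \<Longrightarrow> 0 < a \<Longrightarrow> v a \<le> v b" for a b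
    using vlt[of a b] by (cases "a = b") auto
  have vlt1: "v z < 1" if z: "z > 0" for z
  proof -
    have "v (z + 1) \<le> 1"
    proof (rule tendsto_lowerbound[OF v1])
      show "\<forall>\<^sub>F i in at_top. v (z + 1) \<le> v i"
        using eventually_ge_at_top[of "z + 1"] by eventually_elim (use z vle in auto)
    qed simp
    thus ?thesis using vlt[of z "z + 1"] z by simp
  qed
  have vd: "(v has_real_derivative deriv v z) (at z)" if "z > 0" for z
    using eqn[OF that] DERIV_deriv_iff_real_differentiable by blast
  define W where "W z = integral {0..1} (\<lambda>r. v (z * r))" for z
  have Wint: "((\<lambda>r. v (z * r)) has_integral W z) {0..1}" if "z > 0" for z
    using eqn[OF that] unfolding W_def by (simp add: integrable_integral)
  have Vint: "(v has_integral z * W z) {0..z}" if z: "z > 0" for z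
  proof -
    have "((\<lambda>r. v (z * r)) has_integral W z) ((\<lambda>x. x / z) ` {0..z})" using Wint[OF z] z by simp
    hence "(v has_integral (\<bar>z\<bar> *\<^sub>R W z)) {0..z}"
      using has_integral_stretch_real_iff[of z v "W z" 0 z] z by simp
    thus ?thesis using z by simp
  qed
  have Wd: "(W has_real_derivative (v z - W z) / z) (at z)" if z: "z > 0" for z
  proof -
    define V where "V x = integral {0..x} v" for x
    have vint: "v integrable_on {0..z+1}" using Vint[of "z+1"] z by (auto simp: integrable_on_def)
    have "(V has_vector_derivative v z) (at z within {0..z+1} - {})"
      unfolding V_def
    proof (rule integral_has_vector_derivative_continuous_at[OF vint])
      show "z \<in> {0..z+1} - {}" using z by simp
      show "continuous (at z within {0..z+1} - {}) v"
        using DERIV_isCont[OF vd[OF z]] by (rule continuous_at_imp_continuous_within)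
    qed simp
    moreover have "at z within {0..z+1} - {} = at z" using z by (intro at_within_interior) auto
    ultimately have dV: "(V has_real_derivative v z) (at z)"
      by (simp add: has_real_derivative_iff_has_vector_derivative)
    have VW: "V x = x * W x" if "x > 0" for x
      unfolding V_def using Vint[OF that] by (rule integral_unique)
    have d1: "((\<lambda>x. V x / x) has_real_derivative (v z * z - V z * 1) / (z * z)) (at z)"
      using z by (auto intro!: derivative_eq_intros dV)
    have eqd: "(v z * z - V z * 1) / (z * z) = (v z - W z) / z"
      using z VW[OF z] by (simp add: field_simps)
    have d2: "((\<lambda>x. V x / x) has_real_derivative (v z - W z) / z) (at z)"
      using d1 unfolding eqd .
    show ?thesis
      by (rule has_field_derivative_transform_within_open[OF d2, of "{0<..}"])
         (use z VW in auto)
  qed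
  have Wb: "0 \<le> W z" "W z \<le> v z" if z: "z > 0" for z
  proof -
    define g where "g r = (if r = 0 then v z else v (z * r))" for r
    have gi: "(g has_integral W z) {0..1}"
      by (rule has_integral_spike[OF negligible_sing[of 0] _ Wint[OF z]]) (auto simp: g_def)
    have gb: "0 \<le> g r" "g r \<le> v z" if "r \<in> {0..1}" for r
      using that z vpos[of z] vpos[of "z * r"] vle[of "z * r" z]
      by (auto simp: g_def mult_le_cancel_left1 less_le)
    have c1: "((\<lambda>r. 0) has_integral 0) {0..1::real}" by simp
    have c2: "((\<lambda>r. v z) has_integral v z) {0..1::real}" using has_integral_const_real[of "v z" 0 1] by simp
    show "0 \<le> W z" by (rule has_integral_le[OF c1 gi]) (use gb in auto)
    show "W z \<le> v z" by (rule has_integral_le[OF gi c2]) (use gb in auto)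
  qed
  define tv where "tv z = ln (v z / (1 - v z))" for z
  have sgtv: "sg (tv z) = v z" if "z > 0" for z unfolding tv_def using vpos[OF that] vlt1[OF that] by (rule sg_logit)
  have tvd: "(tv has_real_derivative deriv v z / (v z * (1 - v z))) (at z)" if z: "z > 0" for z
  proof -
    have a: "0 < v z" "v z < 1" using vpos[OF z] vlt1[OF z] by auto
    have "(tv has_real_derivative (deriv v z * (1 - v z) - v z * (- deriv v z)) / ((1 - v z) * (1 - v z)) / (v z / (1 - v z))) (at z)"
      unfolding tv_def using a by (auto intro!: derivative_eq_intros vd[OF z] simp: power2_eq_square)
    moreover have "(deriv v z * (1 - v z) - v z * (- deriv v z)) / ((1 - v z) * (1 - v z)) / (v z / (1 - v z))
        = deriv v z / (v z * (1 - v z))"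
    proof -
      have n1: "1 - v z \<noteq> 0" "v z \<noteq> 0" using a by auto
      have aux: "q \<noteq> 0 \<Longrightarrow> w \<noteq> 0 \<Longrightarrow> d / (q * q) / (w / q) = d / (w * q)" for q w d :: real
        by (simp add: field_simps)
      have "deriv v z * (1 - v z) - v z * (- deriv v z) = deriv v z" by (simp add: algebra_simps)
      thus ?thesis using aux[OF n1] by simp
    qed
    ultimately show ?thesis by simp
  qed
  define D where "D z = W z - PP (tv z)" for z
  define Dd where "Dd z = (v z - W z) / z - sg (tv z) * (1 - sg (tv z)) * (\<beta> * ss (tv z) / (1 - 2 * ss (tv z)))
      * (deriv v z / (v z * (1 - v z)))" for z
  have Dder: "(D has_real_derivative Dd z) (at z)" if z: "z > 0" for z
    unfolding D_def[abs_def] Dd_def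
    by (rule DERIV_diff[OF Wd[OF z] DERIV_chain2[OF PP_deriv tvd[OF z]]])
  have Dd_eq: "Dd z = - D z / (z * (1 - 2 * ss (tv z)))" if z: "z > 0" for z
  proof -
    define s where "s = ss (tv z)"
    have a: "0 < v z" "v z < 1" using vpos[OF z] vlt1[OF z] by auto
    have n: "1 - 2 * s \<noteq> 0" using ss_x(3)[of "tv z"] unfolding s_def by linarith
    have e: "\<beta> * z * deriv v z + (v z)\<^sup>2 + v z = 2 * W z" using eqn[OF z] unfolding W_def by simp
    have "deriv v z = (2 * W z - (v z)\<^sup>2 - v z) / (\<beta> * z)" using e z bpos by (simp add: field_simps)
    hence "Dd z = (v z - W z) / z - v z * (1 - v z) * (\<beta> * s / (1 - 2 * s))
      * ((2 * W z - (v z)\<^sup>2 - v z) / (\<beta> * z) / (v z * (1 - v z)))"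
      unfolding Dd_def sgtv[OF z] s_def by simp
    also have "\<dots> = (v z - W z) / z - s * (2 * W z - (v z)\<^sup>2 - v z) / ((1 - 2 * s) * z)"
    proof -
      have g: "a \<noteq> 0 \<Longrightarrow> q \<noteq> 0 \<Longrightarrow> b \<noteq> 0 \<Longrightarrow> nn \<noteq> 0 \<Longrightarrow> zz \<noteq> 0 \<Longrightarrow>
          a * q * (b * ss' / nn) * (X / (b * zz) / (a * q)) = ss' * X / (nn * zz)" for a q b nn zz ss' X :: real
        by (simp add: field_simps)
      have "v z \<noteq> 0" "1 - v z \<noteq> 0" "\<beta> \<noteq> 0" "z \<noteq> 0" using a bpos z by auto
      thus ?thesis using g[of "v z" "1 - v z" \<beta> "1 - 2 * s" z s "2 * W z - (v z)\<^sup>2 - v z"] n by simp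
    qed
    also have "\<dots> = - D z / (z * (1 - 2 * s))"
    proof -
      have g: "nn \<noteq> 0 \<Longrightarrow> zz \<noteq> 0 \<Longrightarrow> A * nn - B = C \<Longrightarrow> A / zz - B / (nn * zz) = C / (zz * nn)"
        for nn zz A B C :: real
        by (simp add: field_simps)
      have p: "(v z - W z) * (1 - 2 * s) - s * (2 * W z - (v z)\<^sup>2 - v z) = - (W z - (v z - v z * (1 - v z) * s))"
        by (simp add: algebra_simps power2_eq_square)
      have "(v z - W z) / z - s * (2 * W z - (v z)\<^sup>2 - v z) / ((1 - 2 * s) * z) = - (W z - (v z - v z * (1 - v z) * s)) / (z * (1 - 2 * s))"
        by (rule g[OF n _ p]) (use z in simp)
      thus ?thesis unfolding D_def PP_def sgtv[OF z] s_def[symmetric] .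
    qed
    finally show ?thesis unfolding s_def .
  qed
  have D2mono: "D b ^ 2 \<le> D a ^ 2" if ab: "0 < a" "a \<le> b" for a b
  proof (rule deriv_antimono[OF ab(2), of "\<lambda>z. D z ^ 2" "\<lambda>z. 2 * D z * Dd z"])
    fix x assume x: "a \<le> x" "x \<le> b"
    hence x0: "x > 0" using ab by simp
    show "((\<lambda>z. D z ^ 2) has_real_derivative 2 * D x * Dd x) (at x)"
      using DERIV_power[OF Dder[OF x0], of 2] by (simp add: mult_ac)
    have "2 * D x * Dd x = - 2 * (D x)\<^sup>2 / (x * (1 - 2 * ss (tv x)))"
      unfolding Dd_eq[OF x0] by (simp add: power2_eq_square)
    moreover have "0 < x * (1 - 2 * ss (tv x))" using x0 ss_x(3) by simp
    ultimately show "2 * D x * Dd x \<le> 0" by (simp add: divide_nonpos_pos)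
  qed
  have Dbd: "\<bar>D z\<bar> \<le> v z" if z: "z > 0" for z
  proof -
    have "0 \<le> PP (tv z)" "PP (tv z) \<le> v z" using PP_bounds[of "tv z"] sgtv[OF z] by auto
    thus ?thesis using Wb[OF z] unfolding D_def by linarith
  qed
  have D0: "D z = 0" if z: "z > 0" for z
  proof (rule ccontr)
    assume "D z \<noteq> 0"
    hence dpos: "0 < \<bar>D z\<bar>" by simp
    have ev1: "\<forall>\<^sub>F y in at_right 0. v y < \<bar>D z\<bar>" using order_tendstoD(2)[OF v0 dpos] .
    have ev2: "\<forall>\<^sub>F y in at_right 0. 0 < y \<and> y < z"
      unfolding eventually_at_right_field using z by auto
    have "\<forall>\<^sub>F y in at_right (0::real). v y < \<bar>D z\<bar> \<and> 0 < y \<and> y < z" using ev1 ev2 by eventually_elim auto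
    then obtain y where y: "v y < \<bar>D z\<bar>" "0 < y" "y < z"
      using eventually_happens[of _ "at_right (0::real)"] by auto
    have "D z ^ 2 \<le> D y ^ 2" using D2mono[of y z] y by simp
    also have "\<dots> \<le> v y ^ 2" using Dbd[OF y(2)] by (simp add: power2_le_iff_abs_le abs_le_iff)
    also have "\<dots> < \<bar>D z\<bar> ^ 2" using y vpos[OF y(2)] by (intro power_strict_mono) auto
    finally show False by simp
  qed
  define H where "H z = th (tv z) - ln z" for z
  have Hd: "(H has_real_derivative 0) (at z)" if z: "z > 0" for z
  proof -
    have d: "(H has_real_derivative ff (tv z) * (deriv v z / (v z * (1 - v z))) - 1 / z) (at z)"
      unfolding H_def[abs_def] by (rule DERIV_diff[OF DERIV_chain2[OF th_deriv tvd[OF z]] DERIV_ln_divide[OF z]])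
    have a: "0 < v z" "v z < 1" using vpos[OF z] vlt1[OF z] by auto
    define s where "s = ss (tv z)"
    have n: "1 - 2 * s \<noteq> 0" using ss_x(3)[of "tv z"] unfolding s_def by linarith
    have e: "\<beta> * z * deriv v z + (v z)\<^sup>2 + v z = 2 * W z" using eqn[OF z] unfolding W_def by simp
    have WP: "W z = PP (tv z)" using D0[OF z] unfolding D_def by simp
    have r: "2 * (v z - v z * (1 - v z) * s) - (v z)\<^sup>2 - v z = v z * (1 - v z) * (1 - 2 * s)"
      by (simp add: algebra_simps power2_eq_square)
    have "\<beta> * z * deriv v z = v z * (1 - v z) * (1 - 2 * s)"
      using e unfolding WP PP_def sgtv[OF z] s_def[symmetric] r[symmetric] by linarith
    hence "deriv v z = v z * (1 - v z) * (1 - 2 * s) / (\<beta> * z)"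
      using z bpos by (simp add: field_simps)
    moreover have g: "aa \<noteq> 0 \<Longrightarrow> q \<noteq> 0 \<Longrightarrow> b \<noteq> 0 \<Longrightarrow> nn \<noteq> 0 \<Longrightarrow> zz \<noteq> 0 \<Longrightarrow>
        b / nn * (aa * q * nn / (b * zz) / (aa * q)) - 1 / zz = 0" for aa q b nn zz :: real
      by (simp add: field_simps)
    moreover have "v z \<noteq> 0" "1 - v z \<noteq> 0" "\<beta> \<noteq> 0" "z \<noteq> 0" using a bpos z by auto
    ultimately have "ff (tv z) * (deriv v z / (v z * (1 - v z))) - 1 / z = 0"
      unfolding ff_def s_def[symmetric] using n by simp
    thus ?thesis using d by simp
  qed
  have Hc: "H z = H 1" if z: "z > 0" for z
  proof -
    have "H (min z 1) \<le> H (max z 1)"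
      by (rule deriv_mono[of _ _ H "\<lambda>_. 0"]) (use z Hd in auto)
    moreover have "H (max z 1) \<le> H (min z 1)"
      by (rule deriv_antimono[of _ _ H "\<lambda>_. 0"]) (use z Hd in auto)
    ultimately show ?thesis by (cases "z \<le> 1") (auto simp: min_def max_def)
  qed
  define c where "c = exp (H 1)"
  have "v z = uu (c * z)" if z: "z > 0" for z
  proof -
    have "th (tv z) = ln z + H 1" using Hc[OF z] unfolding H_def by simp
    also have "\<dots> = ln (c * z)" unfolding c_def using z by (simp add: ln_mult)
    finally have "TT (ln (c * z)) = tv z" by (metis TT_th)
    thus ?thesis unfolding uu_def using sgtv[OF z] by simp
  qed
  moreover have "c > 0" unfolding c_def by simp
  ultimately show ?thesis by blast
qed

end

theorem lemma5p1:
  fixes \<beta> \<alpha> \<alpha>h :: real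
  assumes "\<beta> > 0"
    and "0 < \<alpha>" "\<alpha> < 1" "\<beta> = (1 - \<alpha>) / (\<alpha> * (1 + \<alpha>))"
    and "0 < \<alpha>h" "\<alpha>h < 1/3" "\<beta> = (1 - 3 * \<alpha>h) / (\<alpha>h * (1 - \<alpha>h))"
  shows "\<exists>u. is_profile \<beta> u
           \<and> (\<forall>v. is_profile \<beta> v \<longrightarrow> (\<exists>c>0. \<forall>z>0. v z = u (c * z)))
           \<and> (u \<sim>[at_right 0] (\<lambda>z. z powr \<alpha>))
           \<and> (\<exists>ch. (\<lambda>z. 1 - u z) \<sim>[at_top] (\<lambda>z. ch * z powr (- \<alpha>h)))"
  proof -
  interpret prof \<beta> \<alpha> \<alpha>h using assms by unfold_locales auto
  show ?thesis using uu_profile uniq u_asym0 u_asym1 by blast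
qed

end
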